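(* Assume (C1) and (C2). Then problem (P) has a solution $\bar u\in\mathcal{N}$ (a critical point of $I$ on $\mathcal{D}$) such that $$I(\bar u)=\inf_{u\in\mathcal{N}}I(u)=:c_*>0.$$ In addition, $m_*\ge 2c_*$, where $m_*:=\inf_{u\in\mathcal{M}}I(u)$.
   Context: Fix real numbers $p,q,r$ with $1<p<q$, $\frac{p}{2}$ a positive integer, and $r\ge 1$, and functions $a,b,c:\mathbb{Z}\to(0,+\infty)$. Conditions: - (C1) There is $b_0>0$ with $b(n)\ge b_0$ for all $n\in\mathbb{Z}$ and $\lim_{|n|\to\infty}b(n)=+\infty$. - (C2) There is $c_0>0$ with $c(n)\le c_0$ for all $n\in\mathbb{Z}$ and $\sum_{n\in\mathbb{Z}}c(n)<+\infty$. Notation for a real sequence $u=(u(n))_{n\in\mathbb{Z}}$: $\Delta u(n)=u(n+1)-u(n)$, $u^+(n)=\max\{u(n),0\}$, $u^-(n)=\min\{u(n),0\}$, and $\varphi_p(s)=|s|^{p-2}s$. Spaces: - $E$ is the set of real sequences $u$ with $\|u\|:=\big(\sum_{n\in\mathbb{Z}}[a(n)|\Delta u(n)|^p+b(n)|u(n)|^p]\big)^{1/p}<\infty$. - $\mathcal{D}=\{u\in E:\sum_{n\in\mathbb{Z}}c(n)|u(n)|^q\ln|u(n)|^r<+\infty\}$, where terms with $u(n)=0$ are read as $0$. It carries the norm $\|\cdot\|$. For $u,v\in\mathcal{D}$: - $I(u)=\frac1p\|u\|^p+\frac{r}{q^2}\sum_{n}c(n)|u(n)|^q-\frac1q\sum_{n}c(n)|u(n)|^q\ln|u(n)|^r$.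 - $\langle I'(u),v\rangle=\sum_n\big[a(n)|\Delta u(n)|^{p-2}\Delta u(n)\Delta v(n)+b(n)|u(n)|^{p-2}u(n)v(n)\big]-\sum_n c(n)|u(n)|^{q-2}u(n)v(n)\ln|u(n)|^r$. Sets: - $\mathcal{N}=\{u\in\mathcal{D}:u\neq0,\ \langle I'(u),u\rangle=0\}$. - $\mathcal{M}=\{u\in\mathcal{D}:u^+\ne0,\ u^-\neq0,\ \langle I'(u),u^+\rangle=0,\ \langle I'(u),u^-\rangle=0\}$. Problem (P) is $$-\Delta\big(a(n-1)\varphi_p(\Delta u(n-1))\big)+b(n)\varphi_p(u(n))=c(n)|u(n)|^{q-2}u(n)\ln|u(n)|^r,\quad n\in\mathbb{Z},$$ together with $\lim_{|n|\to\infty}u(n)=0$. A solution of (P) means a critical point of $I$ in $\mathcal{D}$, i.e. $u\in\mathcal{D}$ with $\langle I'(u),v\rangle=0$ for all $v\in\mathcal{D}$. *)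

theory Defs
  imports "HOL-Analysis.Analysis"
begin

definition fdiff :: "(int \<Rightarrow> real) \<Rightarrow> int \<Rightarrow> real" where
  "fdiff u n = u (n + 1) - u n"

definition pos_part :: "(int \<Rightarrow> real) \<Rightarrow> int \<Rightarrow> real" where
  "pos_part u n = max (u n) 0"

definition neg_part :: "(int \<Rightarrow> real) \<Rightarrow> int \<Rightarrow> real" where
  "neg_part u n = min (u n) 0"

definition norm_term :: "real \<Rightarrow> (int \<Rightarrow> real) \<Rightarrow> (int \<Rightarrow> real) \<Rightarrow> (int \<Rightarrow> real) \<Rightarrow> int \<Rightarrow> real" where
  "norm_term p a b u n = a n * \<bar>fdiff u n\<bar> powr p + b n * \<bar>u n\<bar> powr p"

definition spaceE :: "real \<Rightarrow> (int \<Rightarrow> real) \<Rightarrow> (int \<Rightarrow> real) \<Rightarrow> (int \<Rightarrow> real) set" where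
  "spaceE p a b = {u. norm_term p a b u summable_on UNIV}"

definition normp :: "real \<Rightarrow> (int \<Rightarrow> real) \<Rightarrow> (int \<Rightarrow> real) \<Rightarrow> (int \<Rightarrow> real) \<Rightarrow> real" where
  "normp p a b u = (\<Sum>\<^sub>\<infinity>n. norm_term p a b u n)"

definition log_term :: "real \<Rightarrow> real \<Rightarrow> (int \<Rightarrow> real) \<Rightarrow> (int \<Rightarrow> real) \<Rightarrow> int \<Rightarrow> real" where
  "log_term q r c u n = (if u n = 0 then 0 else c n * \<bar>u n\<bar> powr q * ln (\<bar>u n\<bar> powr r))"

definition spaceD :: "real \<Rightarrow> real \<Rightarrow> real \<Rightarrow> (int \<Rightarrow> real) \<Rightarrow> (int \<Rightarrow> real) \<Rightarrow> (int \<Rightarrow> real) \<Rightarrow> (int \<Rightarrow> real) set" where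
  "spaceD p q r a b c = {u \<in> spaceE p a b. log_term q r c u summable_on UNIV}"

definition energyI :: "real \<Rightarrow> real \<Rightarrow> real \<Rightarrow> (int \<Rightarrow> real) \<Rightarrow> (int \<Rightarrow> real) \<Rightarrow> (int \<Rightarrow> real) \<Rightarrow> (int \<Rightarrow> real) \<Rightarrow> real" where
  "energyI p q r a b c u =
     normp p a b u / p
     + r / q\<^sup>2 * (\<Sum>\<^sub>\<infinity>n. c n * \<bar>u n\<bar> powr q)
     - (\<Sum>\<^sub>\<infinity>n. log_term q r c u n) / q"

definition phi :: "real \<Rightarrow> real \<Rightarrow> real" where
  "phi s x = \<bar>x\<bar> powr (s - 2) * x"

definition dI :: "real \<Rightarrow> real \<Rightarrow> real \<Rightarrow> (int \<Rightarrow> real) \<Rightarrow> (int \<Rightarrow> real) \<Rightarrow> (int \<Rightarrow> real) \<Rightarrow> (int \<Rightarrow> real) \<Rightarrow> (int \<Rightarrow> real) \<Rightarrow> real" where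
  "dI p q r a b c u v =
     (\<Sum>\<^sub>\<infinity>n. a n * phi p (fdiff u n) * fdiff v n + b n * phi p (u n) * v n)
     - (\<Sum>\<^sub>\<infinity>n. (if u n = 0 then 0 else c n * phi q (u n) * v n * ln (\<bar>u n\<bar> powr r)))"

definition nehari :: "real \<Rightarrow> real \<Rightarrow> real \<Rightarrow> (int \<Rightarrow> real) \<Rightarrow> (int \<Rightarrow> real) \<Rightarrow> (int \<Rightarrow> real) \<Rightarrow> (int \<Rightarrow> real) set" where
  "nehari p q r a b c = {u \<in> spaceD p q r a b c. u \<noteq> (\<lambda>n. 0) \<and> dI p q r a b c u u = 0}"

definition signchanging_nehari :: "real \<Rightarrow> real \<Rightarrow> real \<Rightarrow> (int \<Rightarrow> real) \<Rightarrow> (int \<Rightarrow> real) \<Rightarrow> (int \<Rightarrow> real) \<Rightarrow> (int \<Rightarrow> real) set" where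
  "signchanging_nehari p q r a b c = {u \<in> spaceD p q r a b c.
      pos_part u \<noteq> (\<lambda>n. 0) \<and> neg_part u \<noteq> (\<lambda>n. 0) \<and>
      dI p q r a b c u (pos_part u) = 0 \<and> dI p q r a b c u (neg_part u) = 0}"

end

theory Submission
  imports Defs
begin

lemma sum_cmp:
  fixes f :: "'a \<Rightarrow> real"
  assumes "g summable_on A" "\<And>x. x \<in> A \<Longrightarrow> \<bar>f x\<bar> \<le> g x"
  shows "f summable_on A"
proof -
  have "(\<lambda>x. norm (f x)) summable_on A"
    by (rule summable_on_comparison_test[OF assms(1)]) (use assms(2) in auto)
  then show ?thesis using summable_on_iff_abs_summable_on_real by blast
qed

lemma infsum_abs_le:
  fixes f :: "'a \<Rightarrow> real"
  assumes "g summable_on A" "\<And>x. x \<in> A \<Longrightarrow> \<bar>f x\<bar> \<le> g x"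
  shows "\<bar>infsum f A\<bar> \<le> infsum g A"
proof -
  have "f summable_on A" using sum_cmp assms by blast
  then show ?thesis
    using norm_infsum_le[OF has_sum_infsum[OF \<open>f summable_on A\<close>] has_sum_infsum[OF assms(1)]] assms(2) by auto
qed

lemma infsum_split_fin:
  fixes h :: "'a \<Rightarrow> real"
  assumes "h summable_on UNIV" "finite S"
  shows "infsum h UNIV = sum h S + infsum h (- S)"
proof -
  have "infsum h (S \<union> - S) = infsum h S + infsum h (-S)"
    by (rule infsum_Un_disjoint) (use assms summable_on_subset in auto)
  then show ?thesis using assms by simp
qed

lemma DC:
  fixes f :: "'b \<Rightarrow> 'a \<Rightarrow> real"
  assumes g: "g summable_on UNIV"
    and dom: "eventually (\<lambda>s. \<forall>n. \<bar>f s n\<bar> \<le> g n) F"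
    and lim: "\<And>n. ((\<lambda>s. f s n) \<longlongrightarrow> L n) F"
    and F: "F \<noteq> bot"
  shows "L summable_on UNIV" "((\<lambda>s. infsum (f s) UNIV) \<longlongrightarrow> infsum L UNIV) F"
proof -
  have Lg: "\<bar>L n\<bar> \<le> g n" for n
  proof -
    have "eventually (\<lambda>s. \<bar>f s n\<bar> \<le> g n) F" using dom by (rule eventually_mono) auto
    then show ?thesis using tendsto_le[OF F tendsto_const tendsto_rabs[OF lim[of n]]] by blast
  qed
  have g0: "0 \<le> g n" for n using Lg[of n] by linarith
  show Ls: "L summable_on UNIV" by (rule sum_cmp[OF g]) (use Lg in auto)
  show "((\<lambda>s. infsum (f s) UNIV) \<longlongrightarrow> infsum L UNIV) F"
  proof (rule tendstoI)
    fix e :: real assume e: "e > 0"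
    obtain S where S: "finite S" "dist (sum g S) (infsum g UNIV) \<le> e/4"
      using infsum_finite_approximation[OF g, of "e/4"] e by auto
    have gS: "infsum g (-S) \<le> e/4"
      using infsum_split_fin[OF g S(1)] S(2) by (simp add: dist_real_def)
    have tail: "\<bar>infsum h UNIV - sum h S\<bar> \<le> e/4" if "\<And>n. \<bar>h n\<bar> \<le> g n" for h
    proof -
      have hs: "h summable_on UNIV" by (rule sum_cmp[OF g]) (use that in auto)
      have "\<bar>infsum h (-S)\<bar> \<le> infsum g (-S)"
        by (rule infsum_abs_le) (use g summable_on_subset that in auto)
      then show ?thesis using infsum_split_fin[OF hs S(1)] gS by simp
    qed
    have "((\<lambda>s. sum (f s) S) \<longlongrightarrow> sum L S) F"
      by (rule tendsto_sum) (use lim in auto)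
    then have ev: "eventually (\<lambda>s. dist (sum (f s) S) (sum L S) < e/4) F"
      using e by (intro tendstoD) auto
    show "eventually (\<lambda>s. dist (infsum (f s) UNIV) (infsum L UNIV) < e) F"
      using ev dom
    proof eventually_elim
      case (elim s)
      have "\<bar>infsum (f s) UNIV - sum (f s) S\<bar> \<le> e/4" using tail elim(2) by blast
      moreover have "\<bar>infsum L UNIV - sum L S\<bar> \<le> e/4" using tail Lg by blast
      ultimately show ?case using elim(1) e
        by (simp add: dist_real_def) (smt (verit))
    qed
  qed
qed


lemma finite_sum_le_infsum:
  fixes f :: "'a \<Rightarrow> real"
  assumes "f summable_on UNIV" "\<And>x. 0 \<le> f x" "finite F"
  shows "sum f F \<le> infsum f UNIV"
proof -
  have "infsum f F \<le> infsum f UNIV"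
    by (rule infsum_mono_neutral) (use assms in auto)
  then show ?thesis using assms by simp
qed

definition sc :: "real \<Rightarrow> (int \<Rightarrow> real) \<Rightarrow> int \<Rightarrow> real" where
  "sc t u = (\<lambda>n. t * u n)"

locale setting =
  fixes p q r :: real and a b c :: "int \<Rightarrow> real" and m :: nat and b0 :: real
  assumes p_m: "p = real m" and m_even: "even m" and m2: "2 \<le> m"
    and pq: "p < q" and r1: "1 \<le> r"
    and apos: "\<And>n. 0 < a n" and bpos: "\<And>n. 0 < b n" and cpos: "\<And>n. 0 < c n"
    and b0pos: "0 < b0" and b0le: "\<And>n. b0 \<le> b n"
    and csum: "c summable_on UNIV"
begin

abbreviation "E \<equiv> spaceE p a b"
abbreviation "NT u \<equiv> norm_term p a b u"
abbreviation "Nrm u \<equiv> normp p a b u"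
definition Pw :: "real \<Rightarrow> real" where "Pw x = \<bar>x\<bar> powr q"
definition Lf :: "real \<Rightarrow> real" where
  "Lf x = (if x = 0 then 0 else \<bar>x\<bar> powr q * ln (\<bar>x\<bar> powr r))"
definition Psi where "Psi u = infsum (\<lambda>n. c n * Pw (u n)) UNIV"
definition Phi where "Phi u = infsum (log_term q r c u) UNIV"
abbreviation "I \<equiv> energyI p q r a b c"
abbreviation "dI' \<equiv> dI p q r a b c"
abbreviation "Nh \<equiv> nehari p q r a b c"
definition J where "J u = (1/p - 1/q) * Nrm u + r/q^2 * Psi u"
definition LB :: "real \<Rightarrow> real" where "LB M = r * (1 + (max 1 M) powr (q+1))"

lemma p2: "2 \<le> p" using p_m m2 by simp
lemma q1: "1 < q" using p2 pq by simp
lemma pq_coef: "0 < 1/p - 1/q" using p2 pq by (simp add: field_simps)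

lemma powr_m: "\<bar>x\<bar> powr p = x ^ m"
proof (cases "x = 0")
  case True then show ?thesis using p2 m2 by simp
next
  case False
  then have "\<bar>x\<bar> powr p = \<bar>x\<bar> ^ m" using p_m by (simp add: powr_realpow)
  also have "\<dots> = x ^ m" using m_even by (simp add: power_even_abs)
  finally show ?thesis .
qed

lemma phi_p: "phi p x = x ^ (m - 1)"
proof (cases "x = 0")
  case True then show ?thesis using m2 by (simp add: phi_def)
next
  case False
  have e: "even (m - 2)" using m_even m2 by simp
  have "phi p x = \<bar>x\<bar> powr real (m - 2) * x" using p_m m2 by (simp add: phi_def of_nat_diff)
  also have "\<dots> = \<bar>x\<bar> ^ (m - 2) * x" using False by (simp add: powr_realpow)
  also have "\<dots> = x ^ (m - 2) * x" using e by (simp add: power_even_abs)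
  also have "\<dots> = x ^ (m - 1)"
  proof -
    have "m - 1 = Suc (m - 2)" using m2 by arith
    then show ?thesis by (simp add: power_Suc2)
  qed
  finally show ?thesis .
qed

lemma phi_self: "phi s x * x = \<bar>x\<bar> powr s"
proof (cases "x = 0")
  case True then show ?thesis by (simp add: phi_def)
next
  case False
  have "phi s x * x = \<bar>x\<bar> powr (s - 2) * (x * x)" unfolding phi_def by (simp only: mult.assoc)
  also have "x * x = \<bar>x\<bar> powr 2" using False by (simp add: powr_realpow[of "\<bar>x\<bar>" 2] power2_eq_square)
  also have "\<bar>x\<bar> powr (s - 2) * \<bar>x\<bar> powr 2 = \<bar>x\<bar> powr s" by (metis powr_add diff_add_cancel)
  finally show ?thesis .
qed

lemma NT_eq: "NT u n = a n * (fdiff u n) ^ m + b n * (u n) ^ m"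
  by (simp add: norm_term_def powr_m)

lemma NT_nonneg: "0 \<le> NT u n"
  unfolding norm_term_def using apos[of n] bpos[of n] by simp

lemma logterm_eq: "log_term q r c u n = c n * Lf (u n)"
  by (simp add: log_term_def Lf_def)

lemma dI_self: "dI' u u = Nrm u - Phi u"
proof -
  have 1: "a n * phi p (fdiff u n) * fdiff u n + b n * phi p (u n) * u n = NT u n" for n
    by (simp add: norm_term_def mult.assoc phi_self)
  have 2: "(if u n = 0 then 0 else c n * phi q (u n) * u n * ln (\<bar>u n\<bar> powr r)) = log_term q r c u n" for n
    by (simp add: log_term_def mult.assoc phi_self)
  show ?thesis unfolding dI_def normp_def Phi_def 1 2 ..
qed

lemma E_iff: "u \<in> E \<longleftrightarrow> NT u summable_on UNIV" by (simp add: spaceE_def)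

lemma NT_le: "u \<in> E \<Longrightarrow> NT u n \<le> Nrm u"
  using finite_sum_le_infsum[of "NT u" "{n}"] NT_nonneg by (simp add: E_iff normp_def)

lemma Nrm_nonneg: "0 \<le> Nrm u"
  unfolding normp_def by (rule infsum_nonneg) (simp add: NT_nonneg)

lemma um_le: "u \<in> E \<Longrightarrow> (u n) ^ m \<le> Nrm u / b0"
proof -
  assume u: "u \<in> E"
  have "b0 * (u n) ^ m \<le> b n * (u n) ^ m"
    using b0le[of n] m_even by (intro mult_right_mono) (auto simp: zero_le_even_power)
  also have "\<dots> \<le> NT u n" using apos[of n] m_even by (simp add: NT_eq zero_le_even_power)
  also have "\<dots> \<le> Nrm u" using NT_le u by blast
  finally show ?thesis using b0pos by (simp add: field_simps)
qed

lemma bound_pow: "(x::real) ^ m \<le> K \<Longrightarrow> \<bar>x\<bar> \<le> max 1 K"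
proof -
  assume h: "x ^ m \<le> K"
  show ?thesis
  proof (cases "\<bar>x\<bar> \<le> 1")
    case True then show ?thesis by (auto simp: le_max_iff_disj)
  next
    case False
    then have "\<bar>x\<bar> ^ 1 \<le> \<bar>x\<bar> ^ m" using m2
      by (intro power_increasing) auto
    then have "\<bar>x\<bar> \<le> \<bar>x\<bar> ^ m" by simp
    also have "\<dots> = x ^ m" using m_even by (simp add: power_even_abs)
    finally show ?thesis using h by simp
  qed
qed

lemma bound_E: "u \<in> E \<Longrightarrow> \<bar>u n\<bar> \<le> max 1 (Nrm u / b0)"
  using um_le bound_pow by blast

lemma even_pow_pos: "x \<noteq> 0 \<Longrightarrow> 0 < (x::real) ^ m"
  using m_even by (simp add: zero_less_power_eq)

lemma Nrm_pos: "u \<in> E \<Longrightarrow> u \<noteq> (\<lambda>n. 0) \<Longrightarrow> 0 < Nrm u"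
proof -
  assume u: "u \<in> E" "u \<noteq> (\<lambda>n. 0)"
  then obtain n where n: "u n \<noteq> 0" by auto
  have "0 < b n * (u n) ^ m" using bpos[of n] even_pow_pos[OF n] by simp
  also have "\<dots> \<le> NT u n" using apos[of n] m_even by (simp add: NT_eq zero_le_even_power)
  also have "\<dots> \<le> Nrm u" using NT_le u by blast
  finally show ?thesis .
qed

lemma Pw_nonneg: "0 \<le> Pw x" by (simp add: Pw_def)
lemma Pw_bound: "\<bar>x\<bar> \<le> M \<Longrightarrow> \<bar>Pw x\<bar> \<le> (max 1 M) powr q"
proof -
  assume "\<bar>x\<bar> \<le> M"
  then have "\<bar>x\<bar> \<le> max 1 M" by simp
  then have "\<bar>x\<bar> powr q \<le> (max 1 M) powr q" using q1 by (intro powr_mono2) auto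
  then show ?thesis by (simp add: Pw_def)
qed

lemma ln_bound_small: "0 < (y::real) \<Longrightarrow> y \<le> 1 \<Longrightarrow> - ln y \<le> 1 / y"
proof -
  assume y: "0 < y" "y \<le> 1"
  have "ln (1/y) \<le> 1/y - 1" using y ln_le_minus_one[of "1/y"] by simp
  then show ?thesis using y by (simp add: ln_div)
qed

lemma Lf_bound: "\<bar>x\<bar> \<le> M \<Longrightarrow> \<bar>Lf x\<bar> \<le> LB M"
proof (cases "x = 0")
  case True then show ?thesis using r1 by (simp add: Lf_def LB_def)
next
  case False
  assume xM: "\<bar>x\<bar> \<le> M"
  define y where "y = \<bar>x\<bar>"
  have y: "0 < y" using False by (simp add: y_def)
  have Lfy: "Lf x = r * (y powr q * ln y)" using False y by (simp add: Lf_def y_def ln_powr)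
  have Mp: "0 \<le> (max 1 M) powr (q+1)" by simp
  show ?thesis
  proof (cases "y \<le> 1")
    case True
    have l0: "ln y \<le> 0" using True y by simp
    have "y powr q * (- ln y) \<le> y powr q * (1/y)"
      using ln_bound_small[OF y True] by (intro mult_left_mono) auto
    also have "\<dots> = y powr (q - 1)" using y by (simp add: powr_diff)
    also have "\<dots> \<le> 1" using y True q1 by (intro powr_le1) auto
    finally have "\<bar>y powr q * ln y\<bar> \<le> 1" using l0 y by (simp add: abs_mult)
    then have "\<bar>Lf x\<bar> \<le> r * 1" using r1 by (simp add: Lfy abs_mult)
    moreover have "r * 1 \<le> r * (1 + (max 1 M) powr (q+1))" by (intro mult_left_mono) (use r1 Mp in auto)
    ultimately show ?thesis unfolding LB_def by linarith
  next
    case False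
    have l0: "0 \<le> ln y" using False by simp
    have "ln y \<le> y" using y ln_le_minus_one[of y] by simp
    then have "y powr q * ln y \<le> y powr q * y" by (intro mult_left_mono) auto
    also have "\<dots> = y powr (q + 1)" using y by (simp add: powr_add)
    also have "\<dots> \<le> (max 1 M) powr (q + 1)" using xM q1 y by (intro powr_mono2) (auto simp: y_def)
    finally have "\<bar>y powr q * ln y\<bar> \<le> (max 1 M) powr (q+1)" using l0 y by (simp add: abs_mult)
    then have "\<bar>Lf x\<bar> \<le> r * (max 1 M) powr (q+1)" using r1 by (simp add: Lfy abs_mult)
    then show ?thesis using r1 unfolding LB_def by (simp add: algebra_simps)
  qed
qed

lemma c_nonneg: "0 \<le> c n" using cpos[of n] by simp

lemma csum_mult: "(\<lambda>n. c n * K) summable_on UNIV"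
  using summable_on_cmult_left[OF csum] by simp

lemma log_summable: "(\<And>n. \<bar>u n\<bar> \<le> M) \<Longrightarrow> log_term q r c u summable_on UNIV"
  by (rule sum_cmp[OF csum_mult[of "LB M"]])
     (auto simp: logterm_eq abs_mult c_nonneg Lf_bound mult_left_mono)

lemma Pw_summable: "(\<And>n. \<bar>u n\<bar> \<le> M) \<Longrightarrow> (\<lambda>n. c n * Pw (u n)) summable_on UNIV"
  by (rule sum_cmp[OF csum_mult[of "(max 1 M) powr q"]])
     (auto simp: abs_mult c_nonneg Pw_bound mult_left_mono)

lemma E_D: "u \<in> E \<Longrightarrow> u \<in> spaceD p q r a b c"
  unfolding spaceD_def using log_summable bound_E by blast

lemma Psi_nonneg: "0 \<le> Psi u"
  unfolding Psi_def by (rule infsum_nonneg) (simp add: c_nonneg Pw_nonneg)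

end

context setting begin

lemma fdiff_sc: "fdiff (sc t u) n = t * fdiff u n"
  by (simp add: fdiff_def sc_def algebra_simps)

lemma NT_sc: "NT (sc t u) n = t ^ m * NT u n"
  by (simp add: NT_eq fdiff_sc) (simp add: sc_def power_mult_distrib algebra_simps)

lemma sc_E: "u \<in> E \<Longrightarrow> sc t u \<in> E"
  unfolding E_iff NT_sc by (rule summable_on_cmult_right)

lemma Nrm_sc: "u \<in> E \<Longrightarrow> Nrm (sc t u) = t ^ m * Nrm u"
  unfolding normp_def NT_sc by (rule infsum_cmult_right) (simp add: E_iff)

lemma Pw_sc: "Pw (t * x) = \<bar>t\<bar> powr q * Pw x"
  by (simp add: Pw_def abs_mult powr_mult)

lemma Lf_sc: "0 < t \<Longrightarrow> Lf (t * x) = t powr q * (Lf x + r * ln t * Pw x)"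
proof (cases "x = 0")
  case True then show ?thesis by (simp add: Lf_def Pw_def)
next
  case False
  assume t: "0 < t"
  have ax: "0 < \<bar>x\<bar>" using False by simp
  have "Lf (t * x) = (t * \<bar>x\<bar>) powr q * (r * ln (t * \<bar>x\<bar>))"
    using False t by (simp add: Lf_def abs_mult ln_powr)
  also have "\<dots> = t powr q * (\<bar>x\<bar> powr q * (r * ln \<bar>x\<bar>) + r * ln t * \<bar>x\<bar> powr q)"
    using t ax by (simp add: powr_mult ln_mult algebra_simps)
  also have "\<dots> = t powr q * (Lf x + r * ln t * Pw x)"
    using False ax by (simp add: Lf_def Pw_def ln_powr)
  finally show ?thesis .
qed

lemma Psi_sc: "(\<And>n. \<bar>u n\<bar> \<le> M) \<Longrightarrow> Psi (sc t u) = \<bar>t\<bar> powr q * Psi u"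
proof -
  assume bd: "\<And>n. \<bar>u n\<bar> \<le> M"
  have "Psi (sc t u) = infsum (\<lambda>n. \<bar>t\<bar> powr q * (c n * Pw (u n))) UNIV"
    unfolding Psi_def sc_def Pw_sc by (simp add: algebra_simps)
  also have "\<dots> = \<bar>t\<bar> powr q * Psi u"
    unfolding Psi_def by (rule infsum_cmult_right) (rule Pw_summable[OF bd])
  finally show ?thesis .
qed

lemma Phi_sc: "(\<And>n. \<bar>u n\<bar> \<le> M) \<Longrightarrow> 0 < t \<Longrightarrow>
    Phi (sc t u) = t powr q * (Phi u + r * ln t * Psi u)"
proof -
  assume bd: "\<And>n. \<bar>u n\<bar> \<le> M" and t: "0 < t"
  have s1: "log_term q r c u summable_on UNIV" by (rule log_summable[OF bd])
  have s2: "(\<lambda>n. r * ln t * (c n * Pw (u n))) summable_on UNIV"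
    by (rule summable_on_cmult_right) (rule Pw_summable[OF bd])
  have "Phi (sc t u) = infsum (\<lambda>n. t powr q * (log_term q r c u n + r * ln t * (c n * Pw (u n)))) UNIV"
    unfolding Phi_def logterm_eq sc_def using t by (simp add: Lf_sc algebra_simps)
  also have "\<dots> = t powr q * infsum (\<lambda>n. log_term q r c u n + r * ln t * (c n * Pw (u n))) UNIV"
    by (rule infsum_cmult_right) (rule summable_on_add[OF s1 s2])
  also have "infsum (\<lambda>n. log_term q r c u n + r * ln t * (c n * Pw (u n))) UNIV
      = Phi u + r * ln t * Psi u"
    unfolding Phi_def Psi_def using infsum_add[OF s1 s2] infsum_cmult_right[OF Pw_summable[OF bd]]
    by simp
  finally show ?thesis .
qed

lemma I_eq: "I w = Nrm w / p + r / q^2 * Psi w - Phi w / q"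
  by (simp add: energyI_def Psi_def Pw_def Phi_def)

lemma I_sc: "w \<in> E \<Longrightarrow> 0 < t \<Longrightarrow>
   I (sc t w) = t ^ m * Nrm w / p + r / q^2 * (t powr q * Psi w) - t powr q * (Phi w + r * ln t * Psi w) / q"
proof -
  assume wE: "w \<in> E" and t: "0 < t"
  have bd: "\<And>n. \<bar>w n\<bar> \<le> max 1 (Nrm w / b0)" using bound_E[OF wE] .
  show ?thesis using Nrm_sc[OF wE] Psi_sc[OF bd] Phi_sc[OF bd t] t by (simp add: I_eq)
qed

lemma dI_sc: "w \<in> E \<Longrightarrow> 0 < t \<Longrightarrow>
   dI' (sc t w) (sc t w) = t ^ m * Nrm w - t powr q * (Phi w + r * ln t * Psi w)"
proof -
  assume wE: "w \<in> E" and t: "0 < t"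
  have bd: "\<And>n. \<bar>w n\<bar> \<le> max 1 (Nrm w / b0)" using bound_E[OF wE] .
  show ?thesis using Nrm_sc[OF wE] Phi_sc[OF bd t] by (simp add: dI_self)
qed

lemma sc_nz: "t \<noteq> 0 \<Longrightarrow> w \<noteq> (\<lambda>n. 0) \<Longrightarrow> sc t w \<noteq> (\<lambda>n. 0)"
  by (auto simp: sc_def fun_eq_iff)

lemma Nh_iff: "w \<in> E \<Longrightarrow> w \<in> Nh \<longleftrightarrow> w \<noteq> (\<lambda>n. 0) \<and> Nrm w = Phi w"
  using E_D by (auto simp: nehari_def dI_self)

lemma Nh_E: "w \<in> Nh \<Longrightarrow> w \<in> E"
  by (simp add: nehari_def spaceD_def)

lemma I_Nh: "w \<in> Nh \<Longrightarrow> I w = J w"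
  using Nh_iff[OF Nh_E] by (simp add: I_eq J_def algebra_simps)

lemma Lf_nonpos: "\<bar>x\<bar> \<le> 1 \<Longrightarrow> Lf x \<le> 0"
proof -
  assume x: "\<bar>x\<bar> \<le> 1"
  have "\<bar>x\<bar> powr r \<le> 1" using x r1 by (intro powr_le1) auto
  have "ln (\<bar>x\<bar> powr r) \<le> 0"
  proof (cases "x = 0")
    case False
    then have "ln (\<bar>x\<bar> powr r) \<le> \<bar>x\<bar> powr r - 1" by (intro ln_le_minus_one) auto
    then show ?thesis using \<open>\<bar>x\<bar> powr r \<le> 1\<close> by linarith
  qed simp
  then show ?thesis unfolding Lf_def by (simp add: mult_nonneg_nonpos)
qed

lemma Nrm_ge_b0: "w \<in> Nh \<Longrightarrow> b0 \<le> Nrm w"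
proof -
  assume w: "w \<in> Nh"
  have wE: "w \<in> E" using Nh_E w .
  have nz: "w \<noteq> (\<lambda>n. 0)" and eq: "Nrm w = Phi w" using Nh_iff[OF wE] w by auto
  have pos: "0 < Phi w" using Nrm_pos[OF wE nz] eq by simp
  have "\<exists>n. 1 < \<bar>w n\<bar>"
  proof (rule ccontr)
    assume "\<not> (\<exists>n. 1 < \<bar>w n\<bar>)"
    then have "\<forall>n. \<bar>w n\<bar> \<le> 1" by (simp add: not_less)
    then have w1: "\<And>n. \<bar>w n\<bar> \<le> 1" by blast
    have ls: "log_term q r c w summable_on UNIV" using log_summable[of w 1] w1 by blast
    have "Phi w \<le> 0" unfolding Phi_def
      by (rule infsum_le_finite_sums[OF ls], rule sum_nonpos)
         (use w1 in \<open>auto simp: logterm_eq c_nonneg Lf_nonpos mult_nonneg_nonpos\<close>)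
    then show False using pos by simp
  qed
  then obtain n where n: "1 < \<bar>w n\<bar>" by blast
  have "1 \<le> \<bar>w n\<bar> ^ m" using n by (simp add: one_le_power)
  then have "1 \<le> (w n) ^ m" using m_even by (simp add: power_even_abs)
  then have "b0 * 1 \<le> b n * (w n) ^ m" using b0le[of n] b0pos by (intro mult_mono) auto
  also have "\<dots> \<le> NT u n" if "u = w" for u using apos[of n] m_even that by (simp add: NT_eq zero_le_even_power)
  also have "NT w n \<le> Nrm w" using NT_le wE by blast
  finally show ?thesis by simp
qed

lemma I_pos: "w \<in> Nh \<Longrightarrow> (1/p - 1/q) * b0 \<le> I w"
proof -
  assume w: "w \<in> Nh"
  have "(1/p - 1/q) * b0 \<le> (1/p - 1/q) * Nrm w"
    using Nrm_ge_b0[OF w] pq_coef by (intro mult_left_mono) auto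
  moreover have "0 \<le> r / q^2 * Psi w" using Psi_nonneg r1 by simp
  ultimately show ?thesis using I_Nh[OF w] by (simp add: J_def)
qed

lemma root_gen:
  assumes N: "0 < N" and Pp: "0 < Ps" and e: "0 < e" "e \<le> T"
    and ge: "t0 ^ m * N - t0 powr q * (Ph + r * ln t0 * Ps) \<le> 0" "t0 = T"
    and ePh: "Ph + r * ln e * Ps < 0"
  shows "\<exists>t. e \<le> t \<and> t \<le> T \<and> t ^ m * N = t powr q * (Ph + r * ln t * Ps)"
proof -
  define G where "G t = t ^ m * N - t powr q * (Ph + r * ln t * Ps)" for t
  have "0 < e ^ m * N" using e N by simp
  moreover have "e powr q * (Ph + r * ln e * Ps) \<le> 0" using ePh e by (simp add: mult_nonneg_nonpos)
  ultimately have Ge: "0 \<le> G e" unfolding G_def by simp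
  have cont: "continuous_on {e..T} G"
    unfolding G_def using e by (intro continuous_intros) auto
  obtain t where "e \<le> t" "t \<le> T" "G t = 0"
    using IVT2'[of G T 0 e, OF _ Ge e(2) cont] ge by (auto simp: G_def)
  then show ?thesis unfolding G_def by auto
qed

lemma small_eps:
  assumes Pp: "0 < Ps"
  shows "\<exists>e. 0 < e \<and> e < 1 \<and> Ph + r * ln e * Ps < 0"
proof -
  define e where "e = exp (- (\<bar>Ph\<bar> + 1) / (r * Ps))"
  have rP: "0 < r * Ps" using r1 Pp by simp
  have le: "ln e = - (\<bar>Ph\<bar> + 1) / (r * Ps)" by (simp add: e_def)
  have "r * ln e * Ps = (r * Ps) * (- (\<bar>Ph\<bar> + 1) / (r * Ps))" unfolding le by simp
  also have "\<dots> = - (\<bar>Ph\<bar> + 1)"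
  proof -
    have ne: "r * Ps \<noteq> 0" using rP by linarith
    show ?thesis by (simp only: times_divide_eq_right nonzero_mult_div_cancel_left[OF ne])
  qed
  finally have "r * ln e * Ps = - (\<bar>Ph\<bar> + 1)" .
  moreover have "e < 1"
  proof -
    have "- (\<bar>Ph\<bar> + 1) / (r * Ps) < 0" using rP by (intro divide_neg_pos) auto
    then show ?thesis unfolding e_def by simp
  qed
  ultimately show ?thesis using e_def by (intro exI[of _ e]) auto
qed

lemma root1:
  assumes N: "0 < N" and Pp: "0 < Ps" and NP: "N \<le> Ph"
  shows "\<exists>t. 0 < t \<and> t \<le> 1 \<and> t ^ m * N = t powr q * (Ph + r * ln t * Ps)"
proof -
  obtain e where e: "0 < e" "e < 1" "Ph + r * ln e * Ps < 0" using small_eps[OF Pp] by blast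
  have "1 ^ m * N - 1 powr q * (Ph + r * ln 1 * Ps) \<le> 0" using NP by simp
  then obtain t where "e \<le> t" "t \<le> 1" "t ^ m * N = t powr q * (Ph + r * ln t * Ps)"
    using root_gen[OF N Pp e(1) _ _ refl e(3), of 1] e by auto
  then show ?thesis using e by (intro exI[of _ t]) auto
qed

lemma root2:
  assumes N: "0 < N" and Pp: "0 < Ps"
  shows "\<exists>t. 0 < t \<and> t ^ m * N = t powr q * (Ph + r * ln t * Ps)"
proof -
  obtain e where e: "0 < e" "e < 1" "Ph + r * ln e * Ps < 0" using small_eps[OF Pp] by blast
  define T where "T = exp (max 0 ((N - Ph) / (r * Ps)))"
  have rP: "0 < r * Ps" using r1 Pp by simp
  have T1: "1 \<le> T" unfolding T_def by simp
  have "(N - Ph) / (r * Ps) \<le> ln T" unfolding T_def by simp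
  then have "N - Ph \<le> r * ln T * Ps" using rP by (simp add: field_simps)
  then have h1: "N \<le> Ph + r * ln T * Ps" by simp
  have "T ^ m = T powr p" using T1 p_m by (simp add: powr_realpow)
  also have "\<dots> \<le> T powr q" using T1 pq by (intro powr_mono) auto
  finally have "T ^ m * N \<le> T powr q * N" using N by (intro mult_right_mono) auto
  also have "\<dots> \<le> T powr q * (Ph + r * ln T * Ps)" using h1 by (intro mult_left_mono) auto
  finally have "T ^ m * N - T powr q * (Ph + r * ln T * Ps) \<le> 0" by simp
  then obtain t where "e \<le> t" "t \<le> T" "t ^ m * N = t powr q * (Ph + r * ln t * Ps)"
    using root_gen[OF N Pp e(1) _ _ refl e(3), of T] e T1 by auto
  then show ?thesis using e by (intro exI[of _ t]) auto
qed

lemma Psi_pos: "w \<in> E \<Longrightarrow> w \<noteq> (\<lambda>n. 0) \<Longrightarrow> 0 < Psi w"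
proof -
  assume wE: "w \<in> E" and nz: "w \<noteq> (\<lambda>n. 0)"
  then obtain n where n: "w n \<noteq> 0" by auto
  have s: "(\<lambda>n. c n * Pw (w n)) summable_on UNIV" using Pw_summable bound_E[OF wE] by blast
  have "0 < c n * Pw (w n)" using cpos[of n] n by (simp add: Pw_def)
  also have "\<dots> \<le> Psi w" unfolding Psi_def
    using finite_sum_le_infsum[OF s, of "{n}"] by (simp add: c_nonneg Pw_nonneg)
  finally show ?thesis .
qed

lemma Fib:
  assumes wE: "w \<in> E" and nz: "w \<noteq> (\<lambda>n. 0)" and le: "Nrm w \<le> Phi w"
  shows "\<exists>t. 0 < t \<and> t \<le> 1 \<and> sc t w \<in> Nh \<and> I (sc t w) \<le> J w"
proof -
  have N: "0 < Nrm w" using Nrm_pos[OF wE nz] .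
  have P: "0 < Psi w" using Psi_pos[OF wE nz] .
  obtain t where t: "0 < t" "t \<le> 1" and eq: "t ^ m * Nrm w = t powr q * (Phi w + r * ln t * Psi w)"
    using root1[OF N P le] by blast
  have inN: "sc t w \<in> Nh"
    unfolding nehari_def using E_D[OF sc_E[OF wE]] sc_nz[OF _ nz] t dI_sc[OF wE t(1)] eq by auto
  have "I (sc t w) = t ^ m * Nrm w / p + r / q^2 * (t powr q * Psi w) - t ^ m * Nrm w / q"
    using I_sc[OF wE t(1)] by (simp only: eq)
  also have "\<dots> = (1/p - 1/q) * (t ^ m * Nrm w) + r / q^2 * (t powr q * Psi w)"
    by (simp add: left_diff_distrib)
  also have "\<dots> \<le> (1/p - 1/q) * (1 * Nrm w) + r / q^2 * (1 * Psi w)"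
  proof (intro add_mono mult_left_mono mult_right_mono)
    show "t ^ m \<le> 1" using t by (simp add: power_le_one)
    show "t powr q \<le> 1" using t q1 by (intro powr_le1) auto
  qed (use pq_coef Nrm_nonneg Psi_nonneg r1 in auto)
  finally show ?thesis using t inN by (auto simp: J_def)
qed

definition delta0 :: "int \<Rightarrow> real" where "delta0 = (\<lambda>n. if n = 0 then 1 else 0)"

lemma delta0_E: "delta0 \<in> E"
proof -
  have "NT delta0 summable_on {-1, 0}" by simp
  then show ?thesis unfolding E_iff
    by (rule summable_on_cong_neutral[THEN iffD1, rotated -1])
       (use m2 in \<open>auto simp: NT_eq fdiff_def delta0_def power_0_left\<close>)
qed

lemma Nh_nonempty: "Nh \<noteq> {}"
proof -
  have nz: "delta0 \<noteq> (\<lambda>n. 0)" by (auto simp: delta0_def fun_eq_iff)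
  obtain t where t: "0 < t" and eq: "t ^ m * Nrm delta0 = t powr q * (Phi delta0 + r * ln t * Psi delta0)"
    using root2[OF Nrm_pos[OF delta0_E nz] Psi_pos[OF delta0_E nz]] by blast
  have "sc t delta0 \<in> Nh"
    unfolding nehari_def using E_D[OF sc_E[OF delta0_E]] sc_nz[OF _ nz] t dI_sc[OF delta0_E t] eq by auto
  then show ?thesis by blast
qed

end

lemma E1:
  fixes y e :: real
  assumes y: "0 < y" "y \<le> 1" and e: "0 < e"
  shows "y powr e * (- ln y) \<le> 1 / e"
proof -
  define z where "z = y powr e"
  have z: "0 < z" "z \<le> 1" using y e by (auto simp: z_def intro: powr_le1)
  have "ln (1/z) \<le> 1/z - 1" using z ln_le_minus_one[of "1/z"] by simp
  then have "- ln z \<le> 1 / z" using z by (simp add: ln_div)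
  moreover have "ln z = e * ln y" using y by (simp add: z_def ln_powr)
  ultimately have "- (e * ln y) \<le> 1 / z" by simp
  then have "z * (- (e * ln y)) \<le> z * (1 / z)" using z by (intro mult_left_mono) auto
  then have "e * (z * (- ln y)) \<le> 1" using z by (simp add: algebra_simps)
  then show ?thesis using e unfolding z_def by (simp add: field_simps)
qed

lemma E2:
  fixes y e :: real
  assumes y: "0 < y" "y \<le> 1" and e: "0 < e"
  shows "y powr e * (- ln y) \<le> (2 / e) * y powr (e / 2)"
proof -
  have "y powr (e/2) * (- ln y) \<le> 1 / (e/2)" using E1[OF y, of "e/2"] e by simp
  then have "y powr (e/2) * (y powr (e/2) * (- ln y)) \<le> y powr (e/2) * (2 / e)"
    by (intro mult_left_mono) auto
  moreover have "y powr e = y powr (e/2) * y powr (e/2)" by (simp add: powr_add[symmetric])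
  ultimately show ?thesis by (simp add: algebra_simps)
qed

context setting begin

lemma phi_abs: "\<bar>phi s x\<bar> = \<bar>x\<bar> powr (s - 1)"
proof (cases "x = 0")
  case True then show ?thesis by (simp add: phi_def)
next
  case False
  have "\<bar>phi s x\<bar> = \<bar>x\<bar> powr (s - 2) * \<bar>x\<bar>" by (simp add: phi_def abs_mult)
  then show ?thesis using powr_add[of "\<bar>x\<bar>" "s - 2" 1] False by simp
qed

lemma phi_div: "x \<noteq> 0 \<Longrightarrow> \<bar>x\<bar> powr s / x = phi s x"
  using phi_self[of s x] by (simp add: field_simps)


definition Pw' :: "real \<Rightarrow> real" where "Pw' x = q * phi q x"
definition Lf' :: "real \<Rightarrow> real" where "Lf' x = q * phi q x * ln (\<bar>x\<bar> powr r) + r * phi q x"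
definition LD :: "real \<Rightarrow> real" where
  "LD R = r * (q / (q - 1) + 1 + (max 1 R) powr q * (q * max 1 R + 1))"

lemma xx_powr: "((x::real) * x) powr e = \<bar>x\<bar> powr (2 * e)"
proof -
  have "(x * x) powr e = (\<bar>x\<bar> * \<bar>x\<bar>) powr e" by (simp only: abs_mult_self_eq)
  also have "\<dots> = \<bar>x\<bar> powr e * \<bar>x\<bar> powr e" by (rule powr_mult)
  also have "\<dots> = \<bar>x\<bar> powr (2 * e)" by (metis powr_add mult_2)
  finally show ?thesis .
qed

lemma Pw_alt: "Pw x = (x * x) powr (q / 2)"
  by (simp add: Pw_def xx_powr)

lemma lnxx: "x \<noteq> 0 \<Longrightarrow> r / 2 * ln (x * x) = ln (\<bar>x\<bar> powr r)"
proof -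
  assume x: "x \<noteq> 0"
  have "ln (x * x) = ln (\<bar>x\<bar> * \<bar>x\<bar>)" by (simp only: abs_mult_self_eq)
  also have "\<dots> = 2 * ln \<bar>x\<bar>" using x by (subst ln_mult) auto
  finally show ?thesis using x by (simp add: ln_powr)
qed

lemma Lf_alt: "Lf x = Pw x * (r / 2 * ln (x * x))"
proof (cases "x = 0")
  case True then show ?thesis by (simp add: Lf_def Pw_def)
next
  case False
  have "Lf x = \<bar>x\<bar> powr q * ln (\<bar>x\<bar> powr r)" using False by (simp add: Lf_def)
  also have "\<dots> = Pw x * (r / 2 * ln (x * x))" by (simp only: Pw_def lnxx[OF False])
  finally show ?thesis .
qed

lemma lim_abs_powr: "0 < e \<Longrightarrow> ((\<lambda>h::real. \<bar>h\<bar> powr e) \<longlongrightarrow> 0) (at 0)"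
proof -
  assume e: "0 < e"
  have "((\<lambda>h::real. \<bar>h\<bar> powr e) \<longlongrightarrow> \<bar>0\<bar> powr e) (at 0)"
    using e by (intro tendsto_intros) auto
  then show ?thesis by simp
qed

lemma Pw_deriv: "(Pw has_real_derivative Pw' x) (at x)"
proof (cases "x = 0")
  case False
  have xx: "0 < x * x" using False not_real_square_gt_zero by blast
  have d: "((\<lambda>x. x * x) has_real_derivative (x + x)) (at x)"
    by (auto intro!: derivative_eq_intros)
  have "((\<lambda>x. (x * x) powr (q / 2)) has_real_derivative (q / 2) * (x * x) powr (q / 2 - of_nat 1) * (x + x)) (at x)"
    by (rule DERIV_fun_powr[OF d xx])
  moreover have "(x * x) powr (q / 2 - 1) = \<bar>x\<bar> powr (q - 2)"
    by (simp add: xx_powr algebra_simps)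
  moreover have "Pw = (\<lambda>x. (x * x) powr (q / 2))" by (rule ext) (rule Pw_alt)
  ultimately show ?thesis by (simp add: Pw'_def phi_def algebra_simps)
next
  case True
  have l: "((\<lambda>h::real. \<bar>h\<bar> powr (q - 1)) \<longlongrightarrow> 0) (at 0)" using q1 by (intro lim_abs_powr) simp
  have "((\<lambda>h. (Pw (0 + h) - Pw 0) / h) \<longlongrightarrow> 0) (at 0)"
  proof (rule Lim_null_comparison[OF _ l])
    show "\<forall>\<^sub>F h in at 0. norm ((Pw (0 + h) - Pw 0) / h) \<le> \<bar>h\<bar> powr (q - 1)"
    proof (rule always_eventually, rule allI)
      fix h :: real
      show "norm ((Pw (0 + h) - Pw 0) / h) \<le> \<bar>h\<bar> powr (q - 1)"
      proof (cases "h = 0")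
        case False
        then have "norm ((Pw (0 + h) - Pw 0) / h) = \<bar>h\<bar> powr q / \<bar>h\<bar> powr 1"
          by (simp add: Pw_def)
        also have "\<dots> = \<bar>h\<bar> powr (q - 1)" by (simp add: powr_diff)
        finally show ?thesis by simp
      qed simp
    qed
  qed
  then show ?thesis using True by (simp add: DERIV_def Pw'_def phi_def)
qed

lemma Lf_deriv: "(Lf has_real_derivative Lf' x) (at x)"
proof (cases "x = 0")
  case False
  have xx: "0 < x * x" using False not_real_square_gt_zero by blast
  have d2: "((\<lambda>x. r / 2 * ln (x * x)) has_real_derivative r / 2 * ((x + x) / (x * x))) (at x)"
    using xx by (auto intro!: derivative_eq_intros)
  have D0: "((\<lambda>x. Pw x * (r / 2 * ln (x * x))) has_real_derivative
          Pw' x * (r / 2 * ln (x * x)) + r / 2 * ((x + x) / (x * x)) * Pw x) (at x)"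
    by (rule DERIV_mult[OF Pw_deriv d2])
  have LL: "Lf = (\<lambda>x. Pw x * (r / 2 * ln (x * x)))" by (rule ext) (rule Lf_alt)
  have D: "(Lf has_real_derivative
          Pw' x * (r / 2 * ln (x * x)) + r / 2 * ((x + x) / (x * x)) * Pw x) (at x)"
    unfolding LL by (rule D0)
  have e2: "r / 2 * ((x + x) / (x * x)) * Pw x = r * phi q x"
  proof -
    have "r / 2 * ((x + x) / (x * x)) * Pw x = r * (\<bar>x\<bar> powr q / x)"
      using False by (simp add: Pw_def field_simps)
    then show ?thesis using phi_div[OF False] by simp
  qed
  have e1: "Pw' x * (r / 2 * ln (x * x)) = q * phi q x * ln (\<bar>x\<bar> powr r)"
    unfolding Pw'_def lnxx[OF False] ..
  show ?thesis using D unfolding e1 e2 Lf'_def .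
next
  case True
  have ev1: "\<forall>\<^sub>F h in at (0::real). \<bar>h\<bar> < 1"
  proof -
    have "\<forall>\<^sub>F h in at (0::real). dist h 0 < 1"
      using tendstoD[OF tendsto_ident_at[of "0::real" UNIV], of 1] by simp
    then show ?thesis by (rule eventually_mono) (simp add: dist_real_def)
  qed
  have l: "((\<lambda>h::real. \<bar>h\<bar> powr ((q - 1) / 2)) \<longlongrightarrow> 0) (at 0)" using q1 by (intro lim_abs_powr) simp
  have "((\<lambda>h. (Lf (0 + h) - Lf 0) / h) \<longlongrightarrow> 0) (at 0)"
  proof (rule Lim_null_comparison[OF _ tendsto_mult_right_zero[OF l]])
    show "\<forall>\<^sub>F h in at 0. norm ((Lf (0 + h) - Lf 0) / h) \<le> r * (2 / (q - 1)) * \<bar>h\<bar> powr ((q - 1) / 2)"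
      using ev1
    proof (rule eventually_mono)
      fix h :: real assume h1: "\<bar>h\<bar> < 1"
      show "norm ((Lf (0 + h) - Lf 0) / h) \<le> r * (2 / (q - 1)) * \<bar>h\<bar> powr ((q - 1) / 2)"
      proof (cases "h = 0")
        case False
        have hp: "0 < \<bar>h\<bar>" using False by simp
        have "norm ((Lf (0 + h) - Lf 0) / h) = r * (\<bar>h\<bar> powr q / \<bar>h\<bar> powr 1 * \<bar>ln \<bar>h\<bar>\<bar>)"
          using False r1 by (simp add: Lf_def ln_powr abs_mult)
        also have "\<bar>h\<bar> powr q / \<bar>h\<bar> powr 1 = \<bar>h\<bar> powr (q - 1)" by (simp add: powr_diff)
        also have "\<bar>ln \<bar>h\<bar>\<bar> = - ln \<bar>h\<bar>" using hp h1 by simp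
        also have "\<bar>h\<bar> powr (q - 1) * (- ln \<bar>h\<bar>) \<le> (2 / (q - 1)) * \<bar>h\<bar> powr ((q - 1) / 2)"
          using E2[OF hp, of "q - 1"] h1 q1 by simp
        finally show ?thesis using r1 by (simp add: mult_left_mono)
      qed simp
    qed
  qed
  then show ?thesis using True by (simp add: DERIV_def Lf'_def phi_def)
qed

lemma Pw'_bound: "\<bar>x\<bar> \<le> R \<Longrightarrow> \<bar>Pw' x\<bar> \<le> q * (max 1 R) powr q"
proof -
  assume x: "\<bar>x\<bar> \<le> R"
  have "\<bar>x\<bar> powr (q - 1) \<le> (max 1 R) powr (q - 1)" using x q1 by (intro powr_mono2) auto
  also have "\<dots> \<le> (max 1 R) powr q" by (intro powr_mono) auto
  finally show ?thesis using q1 by (simp add: Pw'_def abs_mult phi_abs)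
qed

lemma Lf'_bound: "\<bar>x\<bar> \<le> R \<Longrightarrow> \<bar>Lf' x\<bar> \<le> LD R"
proof (cases "x = 0")
  case True
  have "0 \<le> LD R" unfolding LD_def using r1 q1 by (intro mult_nonneg_nonneg add_nonneg_nonneg) auto
  then show ?thesis using True by (simp add: Lf'_def phi_def)
next
  case False
  assume xR: "\<bar>x\<bar> \<le> R"
  define y where "y = \<bar>x\<bar>"
  have y: "0 < y" using False by (simp add: y_def)
  define R1 where "R1 = max 1 R"
  have R1: "1 \<le> R1" "y \<le> R1" using xR by (auto simp: R1_def y_def)
  have "Lf' x = phi q x * r * (q * ln y + 1)"
    using False by (simp add: Lf'_def ln_powr y_def algebra_simps)
  then have eq: "\<bar>Lf' x\<bar> = r * (y powr (q - 1) * \<bar>q * ln y + 1\<bar>)"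
    using r1 by (simp add: abs_mult phi_abs y_def)
  have tri: "\<bar>q * ln y + 1\<bar> \<le> q * \<bar>ln y\<bar> + 1"
    using abs_triangle_ineq[of "q * ln y" 1] q1 by (simp add: abs_mult)
  have nn: "0 \<le> R1 powr q * (q * R1 + 1)" using R1 q1 by simp
  have "y powr (q - 1) * \<bar>q * ln y + 1\<bar> \<le> q / (q - 1) + 1 + R1 powr q * (q * R1 + 1)"
  proof (cases "y \<le> 1")
    case True
    have a: "y powr (q - 1) * (- ln y) \<le> 1 / (q - 1)" using E1[OF y True] q1 by simp
    have b: "y powr (q - 1) \<le> 1" using y True q1 by (intro powr_le1) auto
    have "y powr (q - 1) * \<bar>q * ln y + 1\<bar> \<le> y powr (q - 1) * (q * \<bar>ln y\<bar> + 1)"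
      by (intro mult_left_mono tri) auto
    also have "\<dots> = q * (y powr (q - 1) * (- ln y)) + y powr (q - 1)" using y True by (simp add: algebra_simps)
    also have "\<dots> \<le> q * (1 / (q - 1)) + 1" using a b q1 by (intro add_mono mult_left_mono) auto
    finally have "y powr (q - 1) * \<bar>q * ln y + 1\<bar> \<le> q * (1 / (q - 1)) + 1" .
    then show ?thesis using nn by simp
  next
    case False
    have l: "0 \<le> ln y" "ln y \<le> R1" using False R1 ln_le_minus_one[of y] y by auto
    have b: "y powr (q - 1) \<le> R1 powr q"
    proof -
      have "y powr (q - 1) \<le> R1 powr (q - 1)" using R1 y q1 by (intro powr_mono2) auto
      also have "\<dots> \<le> R1 powr q" using R1 by (intro powr_mono) auto
      finally show ?thesis .
    qed
    have "y powr (q - 1) * \<bar>q * ln y + 1\<bar> = y powr (q - 1) * (q * ln y + 1)"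
      using l q1 by simp
    also have "\<dots> \<le> R1 powr q * (q * R1 + 1)"
    proof -
      have "q * ln y + 1 \<le> q * R1 + 1" using l q1 by simp
      then show ?thesis by (rule mult_mono[OF b]) (use l q1 in auto)
    qed
    finally have "y powr (q - 1) * \<bar>q * ln y + 1\<bar> \<le> R1 powr q * (q * R1 + 1)" .
    moreover have "0 \<le> q / (q - 1)" using q1 by simp
    ultimately show ?thesis by linarith
  qed
  then have "r * (y powr (q - 1) * \<bar>q * ln y + 1\<bar>) \<le> r * (q / (q - 1) + 1 + R1 powr q * (q * R1 + 1))"
    using r1 by (intro mult_left_mono) auto
  then show ?thesis using eq unfolding LD_def R1_def by linarith
qed

end

lemma infsum_diff':
  fixes f g :: "'a \<Rightarrow> real"
  assumes "f summable_on A" "g summable_on A"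
  shows "infsum (\<lambda>x. f x - g x) A = infsum f A - infsum g A"
proof -
  have "(\<lambda>x. - g x) summable_on A" using assms(2) summable_on_uminus by blast
  then have "infsum (\<lambda>x. f x + - g x) A = infsum f A + infsum (\<lambda>x. - g x) A"
    using infsum_add[OF assms(1)] by blast
  then show ?thesis by (simp add: infsum_uminus)
qed

lemma Lip:
  fixes \<phi> \<phi>' :: "real \<Rightarrow> real"
  assumes der: "\<And>x. (\<phi> has_real_derivative \<phi>' x) (at x)"
    and bnd: "\<And>x. \<bar>x\<bar> \<le> R \<Longrightarrow> \<bar>\<phi>' x\<bar> \<le> K"
    and x: "\<bar>x\<bar> \<le> R" and y: "\<bar>y\<bar> \<le> R"
  shows "\<bar>\<phi> x - \<phi> y\<bar> \<le> K * \<bar>x - y\<bar>"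
proof -
  have main: "\<bar>\<phi> b - \<phi> a\<bar> \<le> K * \<bar>b - a\<bar>" if ab: "a < b" "\<bar>a\<bar> \<le> R" "\<bar>b\<bar> \<le> R" for a b
  proof -
    obtain z where z: "a < z" "z < b" "\<phi> b - \<phi> a = (b - a) * \<phi>' z"
      using MVT2[OF ab(1), of \<phi> \<phi>'] der by blast
    have "\<bar>z\<bar> \<le> R" using z ab by auto
    then have "\<bar>\<phi>' z\<bar> \<le> K" by (rule bnd)
    then have ineq: "\<bar>b - a\<bar> * \<bar>\<phi>' z\<bar> \<le> \<bar>b - a\<bar> * K" by (intro mult_left_mono) auto
    have eq: "\<bar>\<phi> b - \<phi> a\<bar> = \<bar>b - a\<bar> * \<bar>\<phi>' z\<bar>" using z(3) by (simp add: abs_mult)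
    show ?thesis using eq ineq by (metis mult.commute)
  qed
  show ?thesis
  proof (cases x y rule: linorder_cases)
    case less then show ?thesis using main[of x y] x y by (simp add: abs_minus_commute)
  next
    case equal then show ?thesis using bnd[OF x] by simp
  next
    case greater then show ?thesis using main[of y x] x y by simp
  qed
qed

lemma diffquot_lim:
  fixes \<phi> :: "real \<Rightarrow> real"
  assumes der: "(\<phi> has_real_derivative D) (at x)"
  shows "((\<lambda>s. (\<phi> (x + s * y) - \<phi> x) / s) \<longlongrightarrow> D * y) (at 0)"
proof -
  have "((\<lambda>s. \<phi> (x + s * y)) has_real_derivative D * y) (at 0)"
  proof -
    have "((\<lambda>s. x + s * y) has_real_derivative y) (at 0)" by (auto intro!: derivative_eq_intros)
    from DERIV_chain2[OF _ this, of \<phi> D] der show ?thesis by (simp add: mult.commute)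
  qed
  then show ?thesis by (simp add: DERIV_def)
qed

lemma pow2_bound:
  fixes X Y :: real
  shows "(\<bar>X\<bar> + \<bar>Y\<bar>) ^ k \<le> 2 ^ k * (\<bar>X\<bar> ^ k + \<bar>Y\<bar> ^ k)"
proof -
  define M where "M = max \<bar>X\<bar> \<bar>Y\<bar>"
  have "(\<bar>X\<bar> + \<bar>Y\<bar>) ^ k \<le> (2 * M) ^ k" by (intro power_mono) (auto simp: M_def)
  also have "\<dots> = 2 ^ k * M ^ k" by (simp add: power_mult_distrib)
  also have "M ^ k \<le> \<bar>X\<bar> ^ k + \<bar>Y\<bar> ^ k" by (cases "\<bar>X\<bar> \<le> \<bar>Y\<bar>") (auto simp: M_def max_def)
  finally show ?thesis by simp
qed

context setting begin

lemma even_abs_pow: "\<bar>x\<bar> ^ m = (x::real) ^ m" using m_even by (simp add: power_even_abs)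

lemma PI: "(X + Y) ^ m \<le> 2 ^ m * (X ^ m + (Y::real) ^ m)"
proof -
  have "(X + Y) ^ m = \<bar>X + Y\<bar> ^ m" by (simp add: even_abs_pow)
  also have "\<dots> \<le> (\<bar>X\<bar> + \<bar>Y\<bar>) ^ m" by (intro power_mono abs_triangle_ineq) auto
  also have "\<dots> \<le> 2 ^ m * (\<bar>X\<bar> ^ m + \<bar>Y\<bar> ^ m)" by (rule pow2_bound)
  finally show ?thesis by (simp add: even_abs_pow)
qed

definition ws :: "(int \<Rightarrow> real) \<Rightarrow> real \<Rightarrow> (int \<Rightarrow> real) \<Rightarrow> int \<Rightarrow> real" where
  "ws u s v = (\<lambda>n. u n + s * v n)"

lemma ws0[simp]: "ws u 0 v = u" by (simp add: ws_def)

lemma fdiff_ws: "fdiff (ws u s v) n = fdiff u n + s * fdiff v n"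
  by (simp add: fdiff_def ws_def algebra_simps)

lemma pow_nonneg: "0 \<le> (x::real) ^ m" using m_even by (simp add: zero_le_even_power)

lemma NT_ws_le: "NT (ws u s v) n \<le> 2 ^ m * (NT u n + s ^ m * NT v n)"
proof -
  have "a n * (fdiff u n + s * fdiff v n) ^ m \<le> a n * (2 ^ m * ((fdiff u n) ^ m + (s * fdiff v n) ^ m))"
    using apos[of n] PI by (intro mult_left_mono) auto
  moreover have "b n * (u n + s * v n) ^ m \<le> b n * (2 ^ m * ((u n) ^ m + (s * v n) ^ m))"
    using bpos[of n] PI by (intro mult_left_mono) auto
  ultimately show ?thesis unfolding NT_eq fdiff_ws
    by (simp add: ws_def power_mult_distrib algebra_simps)
qed

lemma ws_E: "u \<in> E \<Longrightarrow> v \<in> E \<Longrightarrow> ws u s v \<in> E"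
proof -
  assume u: "u \<in> E" and v: "v \<in> E"
  have "(\<lambda>n. 2 ^ m * (NT u n + s ^ m * NT v n)) summable_on UNIV"
    using u v unfolding E_iff
    by (intro summable_on_cmult_right summable_on_add) auto
  then show ?thesis unfolding E_iff
    by (rule sum_cmp) (use NT_ws_le NT_nonneg in \<open>auto\<close>)
qed

lemma neg_E: "v \<in> E \<Longrightarrow> (\<lambda>n. - v n) \<in> E"
  using sc_E[of v "-1"] by (simp add: sc_def)

lemma pow_quot_bound:
  assumes s: "s \<noteq> 0" "\<bar>s\<bar> \<le> 1"
  shows "\<bar>((X + s * Y) ^ m - X ^ m) / s\<bar> \<le> real m * 2 ^ m * (X ^ m + (Y::real) ^ m)"
proof -
  define R where "R = \<bar>X\<bar> + \<bar>Y\<bar>"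
  have der: "\<And>x. ((\<lambda>x. x ^ m) has_real_derivative real m * x ^ (m - 1)) (at x)"
    by (auto intro!: derivative_eq_intros)
  have bnd: "\<bar>real m * x ^ (m - 1)\<bar> \<le> real m * R ^ (m - 1)" if "\<bar>x\<bar> \<le> R" for x
  proof -
    have "\<bar>x\<bar> ^ (m - 1) \<le> R ^ (m - 1)" by (rule power_mono) (use that in auto)
    then show ?thesis by (simp add: abs_mult power_abs mult_left_mono)
  qed
  have xs: "\<bar>X + s * Y\<bar> \<le> R"
  proof -
    have "\<bar>s * Y\<bar> \<le> \<bar>Y\<bar>" using s by (simp add: abs_mult mult_left_le_one_le)
    then show ?thesis unfolding R_def by (smt (verit) abs_triangle_ineq)
  qed
  have "\<bar>(X + s * Y) ^ m - X ^ m\<bar> \<le> real m * R ^ (m - 1) * \<bar>(X + s * Y) - X\<bar>"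
  proof (rule Lip[OF der bnd xs])
    show "\<bar>X\<bar> \<le> R" using abs_ge_zero[of Y] unfolding R_def by linarith
  qed
  also have "\<dots> = \<bar>s\<bar> * (real m * R ^ (m - 1) * \<bar>Y\<bar>)" by (simp add: abs_mult)
  finally have "\<bar>((X + s * Y) ^ m - X ^ m) / s\<bar> \<le> real m * R ^ (m - 1) * \<bar>Y\<bar>"
    using s by (simp add: field_simps abs_divide)
  also have "\<dots> \<le> real m * R ^ (m - 1) * R" by (intro mult_left_mono) (auto simp: R_def)
  also have "\<dots> = real m * R ^ m"
  proof -
    have e: "Suc (m - 1) = m" using m2 by arith
    have "R ^ (m - 1) * R = R ^ m" using power_Suc2[of R "m - 1"] unfolding e by simp
    then show ?thesis by simp
  qed
  also have "\<dots> \<le> real m * (2 ^ m * (\<bar>X\<bar> ^ m + \<bar>Y\<bar> ^ m))"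
    unfolding R_def by (intro mult_left_mono pow2_bound) auto
  finally show ?thesis by (simp add: even_abs_pow)
qed

end

lemma summable_on_diff':
  fixes f g :: "'a \<Rightarrow> real"
  assumes "f summable_on A" "g summable_on A"
  shows "(\<lambda>x. f x - g x) summable_on A"
  using summable_on_add[OF assms(1) summable_on_uminus[THEN iffD2, OF assms(2)]] by simp

lemma ev_small: "eventually (\<lambda>s::real. s \<noteq> 0 \<and> \<bar>s\<bar> < 1) (at 0)"
proof -
  have "\<forall>\<^sub>F h in at (0::real). dist h 0 < 1"
    using tendstoD[OF tendsto_ident_at[of "0::real" UNIV], of 1] by simp
  moreover have "eventually (\<lambda>s::real. s \<noteq> 0) (at 0)" by (simp add: eventually_at_filter)
  ultimately show ?thesis by eventually_elim (simp add: dist_real_def)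
qed

lemma GD:
  fixes \<phi> \<phi>' :: "real \<Rightarrow> real" and u v w :: "int \<Rightarrow> real"
  assumes der: "\<And>x. (\<phi> has_real_derivative \<phi>' x) (at x)"
    and bnd: "\<And>x. \<bar>x\<bar> \<le> R \<Longrightarrow> \<bar>\<phi>' x\<bar> \<le> K"
    and u: "\<And>n. \<bar>u n\<bar> \<le> M" and v: "\<And>n. \<bar>v n\<bar> \<le> M" and R: "2 * M \<le> R"
    and w: "w summable_on UNIV" and w0: "\<And>n. 0 \<le> w n"
  shows "(\<lambda>n. w n * \<phi>' (u n) * v n) summable_on UNIV"
    and "((\<lambda>s. (infsum (\<lambda>n. w n * \<phi> (u n + s * v n)) UNIV - infsum (\<lambda>n. w n * \<phi> (u n)) UNIV) / s)
          \<longlongrightarrow> infsum (\<lambda>n. w n * \<phi>' (u n) * v n) UNIV) (at 0)"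
proof -
  have M0: "0 \<le> M" using u[of 0] by linarith
  have K0: "0 \<le> K" using bnd[of 0] M0 R by force
  have inR: "\<bar>u n + s * v n\<bar> \<le> R" if "\<bar>s\<bar> \<le> 1" for n s
  proof -
    have "\<bar>s * v n\<bar> \<le> M" using that v[of n] M0
      by (simp add: abs_mult) (metis abs_ge_zero mult_le_one mult.commute mult_left_le_one_le order_trans)
    then show ?thesis using u[of n] R abs_triangle_ineq[of "u n" "s * v n"] by linarith
  qed
  have phib: "\<bar>\<phi> x\<bar> \<le> \<bar>\<phi> 0\<bar> + K * R" if "\<bar>x\<bar> \<le> R" for x
  proof -
    have "\<bar>\<phi> x - \<phi> 0\<bar> \<le> K * \<bar>x - 0\<bar>" by (rule Lip[OF der bnd that]) (use M0 R in auto)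
    moreover have "K * \<bar>x\<bar> \<le> K * R" using that K0 by (intro mult_left_mono) auto
    ultimately show ?thesis by simp
  qed
  have sA: "(\<lambda>n. w n * \<phi> (u n + s * v n)) summable_on UNIV" if "\<bar>s\<bar> \<le> 1" for s
  proof (rule sum_cmp)
    show "(\<lambda>n. w n * (\<bar>\<phi> 0\<bar> + K * R)) summable_on UNIV" using summable_on_cmult_left[OF w] by simp
    show "\<bar>w n * \<phi> (u n + s * v n)\<bar> \<le> w n * (\<bar>\<phi> 0\<bar> + K * R)" for n
      using phib[OF inR[OF that]] w0[of n] by (simp add: abs_mult mult_left_mono)
  qed
  have sA0: "(\<lambda>n. w n * \<phi> (u n)) summable_on UNIV" using sA[of 0] by simp
  define f where "f s n = w n * ((\<phi> (u n + s * v n) - \<phi> (u n)) / s)" for s n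
  define L where "L n = w n * (\<phi>' (u n) * v n)" for n
  have dom: "\<forall>\<^sub>F s in at 0. \<forall>n. \<bar>f s n\<bar> \<le> w n * (K * M)"
    using ev_small
  proof eventually_elim
    case (elim s)
    show ?case
    proof
      fix n
      have "\<bar>\<phi> (u n + s * v n) - \<phi> (u n)\<bar> \<le> K * \<bar>(u n + s * v n) - u n\<bar>"
        by (rule Lip[OF der bnd inR]) (use elim u[of n] M0 R in auto)
      also have "\<dots> = \<bar>s\<bar> * (K * \<bar>v n\<bar>)" by (simp add: abs_mult)
      also have "\<dots> \<le> \<bar>s\<bar> * (K * M)" using v[of n] K0 by (intro mult_left_mono) auto
      finally have "\<bar>(\<phi> (u n + s * v n) - \<phi> (u n)) / s\<bar> \<le> K * M"
        using elim by (simp add: abs_divide field_simps)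
      then have "w n * \<bar>(\<phi> (u n + s * v n) - \<phi> (u n)) / s\<bar> \<le> w n * (K * M)"
        using w0[of n] by (rule mult_left_mono)
      moreover have "\<bar>f s n\<bar> = w n * \<bar>(\<phi> (u n + s * v n) - \<phi> (u n)) / s\<bar>"
        unfolding f_def by (simp only: abs_mult abs_of_nonneg[OF w0])
      ultimately show "\<bar>f s n\<bar> \<le> w n * (K * M)" by simp
    qed
  qed
  have lim: "((\<lambda>s. f s n) \<longlongrightarrow> L n) (at 0)" for n
    unfolding f_def L_def by (intro tendsto_mult_left diffquot_lim der)
  have gs: "(\<lambda>n. w n * (K * M)) summable_on UNIV" using summable_on_cmult_left[OF w] by simp
  have nb: "at (0::real) \<noteq> bot" by simp
  note D = DC[OF gs dom lim nb]
  show "(\<lambda>n. w n * \<phi>' (u n) * v n) summable_on UNIV" using D(1) by (simp add: L_def[abs_def] mult.assoc)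
  have eqv: "\<forall>\<^sub>F s in at 0. infsum (f s) UNIV =
      (infsum (\<lambda>n. w n * \<phi> (u n + s * v n)) UNIV - infsum (\<lambda>n. w n * \<phi> (u n)) UNIV) / s"
    using ev_small
  proof eventually_elim
    case (elim s)
    have "infsum (f s) UNIV = infsum (\<lambda>n. (1 / s) * (w n * \<phi> (u n + s * v n) - w n * \<phi> (u n))) UNIV"
      unfolding f_def by (rule infsum_cong) (simp add: field_simps)
    also have "\<dots> = (1 / s) * infsum (\<lambda>n. w n * \<phi> (u n + s * v n) - w n * \<phi> (u n)) UNIV"
      by (rule infsum_cmult_right) (intro summable_on_diff' sA sA0, use elim in auto)
    also have "\<dots> = (1 / s) * (infsum (\<lambda>n. w n * \<phi> (u n + s * v n)) UNIV - infsum (\<lambda>n. w n * \<phi> (u n)) UNIV)"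
      using infsum_diff'[OF sA sA0] elim by simp
    finally show ?case by simp
  qed
  have "infsum L UNIV = infsum (\<lambda>n. w n * \<phi>' (u n) * v n) UNIV" by (simp add: L_def[abs_def] mult.assoc)
  then show "((\<lambda>s. (infsum (\<lambda>n. w n * \<phi> (u n + s * v n)) UNIV - infsum (\<lambda>n. w n * \<phi> (u n)) UNIV) / s)
          \<longlongrightarrow> infsum (\<lambda>n. w n * \<phi>' (u n) * v n) UNIV) (at 0)"
    using tendsto_cong[OF eqv] D(2) by simp
qed


context setting begin

definition T :: "(int \<Rightarrow> real) \<Rightarrow> (int \<Rightarrow> real) \<Rightarrow> int \<Rightarrow> real" where
  "T u v n = a n * phi p (fdiff u n) * fdiff v n + b n * phi p (u n) * v n"

lemma powder: "((\<lambda>x::real. x ^ m) has_real_derivative real m * X ^ (m - 1)) (at X)"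
  by (auto intro!: derivative_eq_intros)

lemma A_deriv:
  assumes u: "u \<in> E" and v: "v \<in> E"
  shows "T u v summable_on UNIV"
    and "((\<lambda>s. (Nrm (ws u s v) - Nrm u) / s) \<longlongrightarrow> real m * infsum (T u v) UNIV) (at 0)"
proof -
  define f where "f s n = (NT (ws u s v) n - NT u n) / s" for s n
  define g where "g n = real m * 2 ^ m * (NT u n + NT v n)" for n
  define L where "L n = real m * T u v n" for n
  have f_eq: "f s n = a n * (((fdiff u n + s * fdiff v n) ^ m - (fdiff u n) ^ m) / s)
                  + b n * (((u n + s * v n) ^ m - (u n) ^ m) / s)" for s n
  proof -
    have num: "NT (ws u s v) n - NT u n = a n * ((fdiff u n + s * fdiff v n) ^ m - (fdiff u n) ^ m)
                  + b n * ((u n + s * v n) ^ m - (u n) ^ m)"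
      unfolding NT_eq fdiff_ws by (simp add: ws_def algebra_simps)
    show ?thesis unfolding f_def num by (simp add: add_divide_distrib)
  qed
  have gs: "g summable_on UNIV" unfolding g_def[abs_def]
    using u v unfolding E_iff by (intro summable_on_cmult_right summable_on_add) auto
  have dom: "\<forall>\<^sub>F s in at 0. \<forall>n. \<bar>f s n\<bar> \<le> g n"
    using ev_small
  proof eventually_elim
    case (elim s)
    show ?case
    proof
      fix n
      have s1: "s \<noteq> 0" "\<bar>s\<bar> \<le> 1" using elim by auto
      have "\<bar>f s n\<bar> \<le> a n * \<bar>((fdiff u n + s * fdiff v n) ^ m - (fdiff u n) ^ m) / s\<bar>
                  + b n * \<bar>((u n + s * v n) ^ m - (u n) ^ m) / s\<bar>"
        unfolding f_eq using apos[of n] bpos[of n]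
        by (metis (no_types, lifting) abs_mult abs_of_pos abs_triangle_ineq)
      also have "\<dots> \<le> a n * (real m * 2 ^ m * ((fdiff u n) ^ m + (fdiff v n) ^ m))
                  + b n * (real m * 2 ^ m * ((u n) ^ m + (v n) ^ m))"
        using apos[of n] bpos[of n] pow_quot_bound[OF s1]
        by (intro add_mono mult_left_mono) auto
      also have "\<dots> = g n" unfolding g_def NT_eq by (simp add: algebra_simps)
      finally show "\<bar>f s n\<bar> \<le> g n" .
    qed
  qed
  have lim: "((\<lambda>s. f s n) \<longlongrightarrow> L n) (at 0)" for n
  proof -
    have "((\<lambda>s. f s n) \<longlongrightarrow> a n * (real m * (fdiff u n) ^ (m - 1) * fdiff v n)
                  + b n * (real m * (u n) ^ (m - 1) * v n)) (at 0)"
      unfolding f_eq by (intro tendsto_add tendsto_mult_left diffquot_lim powder)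
    then show ?thesis by (simp add: L_def T_def phi_p algebra_simps)
  qed
  have nb: "at (0::real) \<noteq> bot" by simp
  note D = DC[OF gs dom lim nb]
  have Ts: "T u v summable_on UNIV"
  proof -
    have "(\<lambda>n. (1 / real m) * L n) summable_on UNIV" by (rule summable_on_cmult_right[OF D(1)])
    moreover have "(\<lambda>n. (1 / real m) * L n) = T u v" using m2 by (auto simp: L_def fun_eq_iff)
    ultimately show ?thesis by simp
  qed
  then show "T u v summable_on UNIV" .
  have iL: "infsum L UNIV = real m * infsum (T u v) UNIV"
    unfolding L_def[abs_def] by (rule infsum_cmult_right) (rule Ts)
  have sN: "NT u summable_on UNIV" "NT (ws u s v) summable_on UNIV" for s
    using u ws_E[OF u v] by (auto simp: E_iff)
  have eqv: "\<forall>\<^sub>F s in at 0. infsum (f s) UNIV = (Nrm (ws u s v) - Nrm u) / s"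
    using ev_small
  proof eventually_elim
    case (elim s)
    have "infsum (f s) UNIV = infsum (\<lambda>n. (1 / s) * (NT (ws u s v) n - NT u n)) UNIV"
      unfolding f_def by simp
    also have "\<dots> = (1 / s) * infsum (\<lambda>n. NT (ws u s v) n - NT u n) UNIV"
      by (rule infsum_cmult_right) (intro summable_on_diff' sN)
    also have "\<dots> = (1 / s) * (Nrm (ws u s v) - Nrm u)"
      unfolding normp_def using infsum_diff'[OF sN(2) sN(1)] by simp
    finally show ?case by simp
  qed
  show "((\<lambda>s. (Nrm (ws u s v) - Nrm u) / s) \<longlongrightarrow> real m * infsum (T u v) UNIV) (at 0)"
    using tendsto_cong[OF eqv] D(2) iL by simp
qed

definition bdE :: "(int \<Rightarrow> real) \<Rightarrow> (int \<Rightarrow> real) \<Rightarrow> real" where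
  "bdE u v = max (max 1 (Nrm u / b0)) (max 1 (Nrm v / b0))"

lemma bdE_u: "u \<in> E \<Longrightarrow> \<bar>u n\<bar> \<le> bdE u v"
  using bound_E[of u n] by (simp add: bdE_def)
lemma bdE_v: "v \<in> E \<Longrightarrow> \<bar>v n\<bar> \<le> bdE u v"
  using bound_E[of v n] by (simp add: bdE_def)

lemma B_deriv:
  assumes u: "u \<in> E" and v: "v \<in> E"
  shows "(\<lambda>n. c n * Pw' (u n) * v n) summable_on UNIV"
    and "((\<lambda>s. (Psi (ws u s v) - Psi u) / s) \<longlongrightarrow> infsum (\<lambda>n. c n * Pw' (u n) * v n) UNIV) (at 0)"
proof -
  note G = GD[of Pw Pw' "2 * bdE u v" "q * (max 1 (2 * bdE u v)) powr q" u "bdE u v" v c,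
      OF Pw_deriv Pw'_bound bdE_u[OF u] bdE_v[OF v] order_refl csum c_nonneg]
  show "(\<lambda>n. c n * Pw' (u n) * v n) summable_on UNIV" by (rule G(1))
  show "((\<lambda>s. (Psi (ws u s v) - Psi u) / s) \<longlongrightarrow> infsum (\<lambda>n. c n * Pw' (u n) * v n) UNIV) (at 0)"
    using G(2) by (simp add: Psi_def ws_def)
qed

lemma C_deriv:
  assumes u: "u \<in> E" and v: "v \<in> E"
  shows "(\<lambda>n. c n * Lf' (u n) * v n) summable_on UNIV"
    and "((\<lambda>s. (Phi (ws u s v) - Phi u) / s) \<longlongrightarrow> infsum (\<lambda>n. c n * Lf' (u n) * v n) UNIV) (at 0)"
proof -
  note G = GD[of Lf Lf' "2 * bdE u v" "LD (2 * bdE u v)" u "bdE u v" v c,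
      OF Lf_deriv Lf'_bound bdE_u[OF u] bdE_v[OF v] order_refl csum c_nonneg]
  show "(\<lambda>n. c n * Lf' (u n) * v n) summable_on UNIV" by (rule G(1))
  show "((\<lambda>s. (Phi (ws u s v) - Phi u) / s) \<longlongrightarrow> infsum (\<lambda>n. c n * Lf' (u n) * v n) UNIV) (at 0)"
  proof -
    have lf: "log_term q r c w = (\<lambda>n. c n * Lf (w n))" for w by (rule ext) (simp add: logterm_eq)
    show ?thesis using G(2) by (simp add: Phi_def ws_def lf)
  qed
qed

lemma D_eq:
  assumes u: "u \<in> E" and v: "v \<in> E"
  shows "real m * infsum (T u v) UNIV / p + r / q^2 * infsum (\<lambda>n. c n * Pw' (u n) * v n) UNIV
         - infsum (\<lambda>n. c n * Lf' (u n) * v n) UNIV / q = dI' u v"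
proof -
  define P where "P n = c n * phi q (u n) * v n" for n
  define S where "S n = c n * phi q (u n) * v n * ln (\<bar>u n\<bar> powr r)" for n
  have q0: "q \<noteq> 0" using q1 by simp
  have eB: "(\<lambda>n. c n * Pw' (u n) * v n) = (\<lambda>n. q * P n)" by (auto simp: Pw'_def P_def fun_eq_iff)
  have eC: "(\<lambda>n. c n * Lf' (u n) * v n) = (\<lambda>n. q * S n + r * P n)"
    by (auto simp: Lf'_def P_def S_def fun_eq_iff algebra_simps)
  have Ps: "P summable_on UNIV"
  proof -
    have "(\<lambda>n. q * P n) summable_on UNIV" using B_deriv(1)[OF u v] unfolding eB .
    then have "(\<lambda>n. (1/q) * (q * P n)) summable_on UNIV" by (rule summable_on_cmult_right)
    then show ?thesis using q0 by simp
  qed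
  have Ss: "S summable_on UNIV"
  proof -
    have c1: "(\<lambda>n. q * S n + r * P n) summable_on UNIV" using C_deriv(1)[OF u v] unfolding eC .
    have "(\<lambda>n. (1/q) * ((q * S n + r * P n) - r * P n)) summable_on UNIV"
      by (intro summable_on_cmult_right summable_on_diff' c1 Ps)
    then show ?thesis using q0 by simp
  qed
  have iB: "infsum (\<lambda>n. c n * Pw' (u n) * v n) UNIV = q * infsum P UNIV"
    unfolding eB by (rule infsum_cmult_right) (rule Ps)
  have iC: "infsum (\<lambda>n. c n * Lf' (u n) * v n) UNIV = q * infsum S UNIV + r * infsum P UNIV"
    unfolding eC
    using infsum_add[OF summable_on_cmult_right[OF Ss] summable_on_cmult_right[OF Ps]]
      infsum_cmult_right[OF Ss] infsum_cmult_right[OF Ps] by simp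
  have S2: "(\<lambda>n. if u n = 0 then 0 else c n * phi q (u n) * v n * ln (\<bar>u n\<bar> powr r)) = S"
    by (auto simp: S_def fun_eq_iff phi_def)
  have dIe: "dI' u v = infsum (T u v) UNIV - infsum S UNIV"
    unfolding dI_def T_def[abs_def] S2 ..
  have mp: "real m / p = 1" using p_m m2 by simp
  show ?thesis unfolding iB iC dIe using q0 mp
    by (simp add: field_simps power2_eq_square)
qed

end

lemma cpt: "compact {f::int\<Rightarrow>real. \<forall>n. \<bar>f n\<bar> \<le> M}"
proof -
  have "{f::int\<Rightarrow>real. \<forall>n. \<bar>f n\<bar> \<le> M} = PiE UNIV (\<lambda>_. {-M..M})"
    by (auto simp: PiE_def Pi_def abs_le_iff) (metis abs_le_iff minus_le_iff)+
  moreover have "compactin (product_topology (\<lambda>i. euclidean) UNIV) (PiE (UNIV::int set) (\<lambda>_. {-M..M::real}))"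
    by (simp add: compactin_PiE)
  ultimately show ?thesis
    by (simp add: euclidean_product_topology compactin_euclidean_iff)
qed

lemma ptw:
  assumes "(f \<longlongrightarrow> (l::int\<Rightarrow>real)) F"
  shows "((\<lambda>x. f x n) \<longlongrightarrow> l n) F"
proof -
  have c: "continuous_on UNIV (\<lambda>x::int\<Rightarrow>real. x n)" by simp
  show ?thesis by (rule continuous_on_tendsto_compose[OF c assms]) auto
qed

context setting begin

definition cs where "cs = Inf (I ` Nh)"

lemma bddb: "bdd_below (I ` Nh)"
  unfolding bdd_below_def
proof (intro exI[of _ "(1/p - 1/q) * b0"] ballI)
  fix x assume "x \<in> I ` Nh"
  then obtain w where "w \<in> Nh" "x = I w" by blast
  then show "(1/p - 1/q) * b0 \<le> x" using I_pos by simp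
qed

lemma cs_le: "w \<in> Nh \<Longrightarrow> cs \<le> I w"
proof -
  assume w: "w \<in> Nh"
  have "I w \<in> I ` Nh" using w by (rule imageI)
  then show ?thesis unfolding cs_def by (rule cInf_lower) (rule bddb)
qed

lemma Pw_cont: "isCont Pw x" using DERIV_isCont[OF Pw_deriv] .
lemma Lf_cont: "isCont Lf x" using DERIV_isCont[OF Lf_deriv] .

lemma exists_min: "\<exists>ub \<in> Nh. I ub = cs"
proof -
  have "\<forall>k. \<exists>u\<in>Nh. I u < cs + inverse (real (Suc k))"
  proof
    fix k
    have "Inf (I ` Nh) < cs + inverse (real (Suc k))" unfolding cs_def by simp
    then show "\<exists>u\<in>Nh. I u < cs + inverse (real (Suc k))"
    proof -
      have ne: "I ` Nh \<noteq> {}" using Nh_nonempty by simp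
      show ?thesis using cInf_lessD[OF ne \<open>Inf (I ` Nh) < cs + inverse (real (Suc k))\<close>] by auto
    qed
  qed
  then have "\<forall>k. \<exists>u. u \<in> Nh \<and> I u < cs + inverse (real (Suc k))" by blast
  from choice[OF this] obtain useq where us0: "\<forall>k. useq k \<in> Nh \<and> I (useq k) < cs + inverse (real (Suc k))"
    by blast
  then have us: "\<And>k. useq k \<in> Nh" "\<And>k. I (useq k) < cs + inverse (real (Suc k))" by auto
  have Ilim: "(\<lambda>k. I (useq k)) \<longlonglongrightarrow> cs"
  proof (rule tendsto_sandwich[of "\<lambda>k. cs" _ _ "\<lambda>k. cs + inverse (real (Suc k))"])
    show "\<forall>\<^sub>F k in sequentially. cs \<le> I (useq k)" by (intro always_eventually allI cs_le us(1))
    show "\<forall>\<^sub>F k in sequentially. I (useq k) \<le> cs + inverse (real (Suc k))" by (intro always_eventually allI less_imp_le us(2))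
    have "(\<lambda>k. cs + inverse (real (Suc k))) \<longlonglongrightarrow> cs + 0"
      by (intro tendsto_add tendsto_const LIMSEQ_inverse_real_of_nat)
    then show "(\<lambda>k. cs + inverse (real (Suc k))) \<longlonglongrightarrow> cs" by simp
  qed (rule tendsto_const)
  define K0 where "K0 = (cs + 1) / (1/p - 1/q)"
  define M0 where "M0 = max 1 (K0 / b0)"
  have NrmK: "Nrm (useq k) \<le> K0" for k
  proof -
    have "inverse (real (Suc k)) \<le> 1" by (simp add: inverse_eq_divide divide_le_eq_1)
    then have "I (useq k) \<le> cs + 1" using us(2)[of k] by linarith
    moreover have "I (useq k) = (1/p - 1/q) * Nrm (useq k) + r / q^2 * Psi (useq k)"
      using I_Nh[OF us(1)] by (simp add: J_def)
    moreover have "0 \<le> r / q^2 * Psi (useq k)" using Psi_nonneg r1 by simp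
    ultimately have "(1/p - 1/q) * Nrm (useq k) \<le> cs + 1" by linarith
    then show ?thesis unfolding K0_def using pq_coef by (simp add: field_simps)
  qed
  have bd: "\<bar>useq k n\<bar> \<le> M0" for k n
  proof -
    have "\<bar>useq k n\<bar> \<le> max 1 (Nrm (useq k) / b0)" by (rule bound_E[OF Nh_E[OF us(1)]])
    also have "\<dots> \<le> M0" unfolding M0_def using NrmK[of k] b0pos
      by (intro max.mono divide_right_mono) auto
    finally show ?thesis .
  qed
  have "seq_compact {f::int\<Rightarrow>real. \<forall>n. \<bar>f n\<bar> \<le> M0}" by (rule compact_imp_seq_compact[OF cpt])
  then obtain l \<sigma> where l: "l \<in> {f::int\<Rightarrow>real. \<forall>n. \<bar>f n\<bar> \<le> M0}" and \<sigma>: "strict_mono \<sigma>"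
      and conv: "(useq \<circ> \<sigma>) \<longlonglongrightarrow> l"
    unfolding seq_compact_def using bd by blast
  define vk where "vk = useq \<circ> \<sigma>"
  have vN: "vk k \<in> Nh" for k using us(1) by (simp add: vk_def)
  have vbd: "\<bar>vk k n\<bar> \<le> M0" for k n using bd by (simp add: vk_def)
  have lbd: "\<bar>l n\<bar> \<le> M0" for n using l by simp
  have pw: "(\<lambda>k. vk k n) \<longlonglongrightarrow> l n" for n using ptw[OF conv] by (simp add: vk_def)
  have IvK: "(\<lambda>k. I (vk k)) \<longlonglongrightarrow> cs" using LIMSEQ_subseq_LIMSEQ[OF Ilim \<sigma>] by (simp add: vk_def o_def)
  have nb: "(sequentially :: nat filter) \<noteq> bot" by simp
  have Psilim: "(\<lambda>k. Psi (vk k)) \<longlonglongrightarrow> Psi l"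
  proof -
    have "((\<lambda>k. infsum (\<lambda>n. c n * Pw (vk k n)) UNIV) \<longlonglongrightarrow> infsum (\<lambda>n. c n * Pw (l n)) UNIV)"
    proof (rule DC(2)[OF csum_mult[of "(max 1 M0) powr q"] _ _ nb])
      show "\<forall>\<^sub>F k in sequentially. \<forall>n. \<bar>c n * Pw (vk k n)\<bar> \<le> c n * max 1 M0 powr q"
        using vbd by (auto simp: abs_mult c_nonneg Pw_bound mult_left_mono)
      show "(\<lambda>k. c n * Pw (vk k n)) \<longlonglongrightarrow> c n * Pw (l n)" for n
        by (intro tendsto_mult_left isCont_tendsto_compose[OF Pw_cont pw])
    qed
    then show ?thesis by (simp add: Psi_def)
  qed
  have Philim: "(\<lambda>k. Phi (vk k)) \<longlonglongrightarrow> Phi l"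
  proof -
    have "((\<lambda>k. infsum (\<lambda>n. c n * Lf (vk k n)) UNIV) \<longlonglongrightarrow> infsum (\<lambda>n. c n * Lf (l n)) UNIV)"
    proof (rule DC(2)[OF csum_mult[of "LB M0"] _ _ nb])
      show "\<forall>\<^sub>F k in sequentially. \<forall>n. \<bar>c n * Lf (vk k n)\<bar> \<le> c n * LB M0"
        using vbd by (auto simp: abs_mult c_nonneg Lf_bound mult_left_mono)
      show "(\<lambda>k. c n * Lf (vk k n)) \<longlonglongrightarrow> c n * Lf (l n)" for n
        by (intro tendsto_mult_left isCont_tendsto_compose[OF Lf_cont pw])
    qed
    moreover have "log_term q r c w = (\<lambda>n. c n * Lf (w n))" for w by (rule ext) (simp add: logterm_eq)
    ultimately show ?thesis by (simp add: Phi_def)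
  qed
  define Lm where "Lm = (cs - r / q^2 * Psi l) / (1/p - 1/q)"
  have Nrm_eq: "Nrm (vk k) = (I (vk k) - r / q^2 * Psi (vk k)) / (1/p - 1/q)" for k
  proof -
    have e: "I (vk k) = (1/p - 1/q) * Nrm (vk k) + r / q^2 * Psi (vk k)"
      using I_Nh[OF vN[of k]] by (simp add: J_def)
    have c0: "(1/p - 1/q) \<noteq> 0" using pq_coef by linarith
    show ?thesis unfolding e using c0 by (simp only: add_diff_cancel_right' nonzero_mult_div_cancel_left[OF c0])
  qed
  have Nlim: "(\<lambda>k. Nrm (vk k)) \<longlonglongrightarrow> Lm"
    unfolding Nrm_eq Lm_def using pq_coef by (intro tendsto_intros IvK Psilim) auto
  have NPhi: "Nrm (vk k) = Phi (vk k)" for k using Nh_iff[OF Nh_E[OF vN[of k]]] vN[of k] by auto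
  have PhiLm: "Phi l = Lm"
    using LIMSEQ_unique[OF Philim] Nlim NPhi by simp
  have Lmb0: "b0 \<le> Lm"
    by (rule LIMSEQ_le_const[OF Nlim]) (use Nrm_ge_b0 vN in auto)
  have NTlim: "(\<lambda>k. NT (vk k) n) \<longlonglongrightarrow> NT l n" for n
    unfolding NT_eq fdiff_def by (intro tendsto_intros pw)
  have finle: "sum (NT l) F \<le> Lm" if F: "finite F" for F
  proof (rule LIMSEQ_le[OF tendsto_sum[OF NTlim] Nlim])
    have "sum (NT (vk k)) F \<le> Nrm (vk k)" for k
      unfolding normp_def
      by (rule finite_sum_le_infsum[OF _ NT_nonneg F]) (use Nh_E[OF vN[of k]] in \<open>simp add: E_iff\<close>)
    then show "\<exists>N. \<forall>k\<ge>N. sum (NT (vk k)) F \<le> Nrm (vk k)" by blast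
  qed
  have lE: "l \<in> E"
    unfolding E_iff
    by (rule nonneg_bdd_above_summable_on) (use NT_nonneg finle in \<open>auto simp: bdd_above_def\<close>)
  have Nl: "Nrm l \<le> Lm"
    unfolding normp_def by (rule infsum_le_finite_sums) (use lE finle in \<open>auto simp: E_iff\<close>)
  have lnz: "l \<noteq> (\<lambda>n. 0)"
  proof
    assume "l = (\<lambda>n. 0)"
    moreover have "log_term q r c (\<lambda>n. 0) = (\<lambda>n. 0)" by (rule ext) (simp add: log_term_def)
    ultimately have "Phi l = 0" by (simp add: Phi_def)
    then show False using PhiLm Lmb0 b0pos by simp
  qed
  obtain t where t: "0 < t" "t \<le> 1" "sc t l \<in> Nh" "I (sc t l) \<le> J l"
    using Fib[OF lE lnz] Nl PhiLm by auto
  have "J l \<le> (1/p - 1/q) * Lm + r / q^2 * Psi l"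
    unfolding J_def using Nl pq_coef r1 by (intro add_mono mult_left_mono) auto
  also have "\<dots> = cs"
  proof -
    have c0: "(1/p - 1/q) \<noteq> 0" using pq_coef by linarith
    show ?thesis unfolding Lm_def
      by (simp only: times_divide_eq_right nonzero_mult_div_cancel_left[OF c0] diff_add_cancel)
  qed
  finally have "I (sc t l) \<le> cs" using t(4) by simp
  moreover have "cs \<le> I (sc t l)" by (rule cs_le[OF t(3)])
  ultimately show ?thesis using t(3) by (intro bexI[of _ "sc t l"]) auto
qed

end

lemma tendsto_fst_prod: "(f \<longlongrightarrow> l) A \<Longrightarrow> ((\<lambda>x. f (fst x)) \<longlongrightarrow> l) (A \<times>\<^sub>F B)"
proof -
  assume h: "(f \<longlongrightarrow> l) A"
  have "(f \<longlongrightarrow> l) (filtermap fst (A \<times>\<^sub>F B))" by (rule tendsto_mono[OF filtermap_fst_prod_filter h])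
  then show ?thesis by (simp add: tendsto_compose_filtermap[symmetric] o_def)
qed

lemma tendsto_snd_prod: "(f \<longlongrightarrow> l) B \<Longrightarrow> ((\<lambda>x. f (snd x)) \<longlongrightarrow> l) (A \<times>\<^sub>F B)"
proof -
  assume h: "(f \<longlongrightarrow> l) B"
  have "(f \<longlongrightarrow> l) (filtermap snd (A \<times>\<^sub>F B))" by (rule tendsto_mono[OF filtermap_snd_prod_filter h])
  then show ?thesis by (simp add: tendsto_compose_filtermap[symmetric] o_def)
qed

context setting begin

lemma G0_pos:
  assumes N: "0 < N" and P: "0 < Ps" and t: "0 < t" "t < 1"
  shows "0 < t powr p * N - t powr q * (N + r * ln t * Ps)"
proof -
  have "ln t < 0" using t by simp
  then have "r * ln t * Ps \<le> 0" using r1 P by (simp add: mult_nonpos_nonneg mult_nonneg_nonpos)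
  then have "t powr q * (N + r * ln t * Ps) \<le> t powr q * N" by (intro mult_left_mono) auto
  also have "\<dots> < t powr p * N" using powr_less_mono'[OF t pq] N by simp
  finally show ?thesis by simp
qed

lemma G0_neg:
  assumes N: "0 < N" and P: "0 < Ps" and t: "1 < t"
  shows "t powr p * N - t powr q * (N + r * ln t * Ps) < 0"
proof -
  have "0 < ln t" using t by simp
  then have "0 \<le> r * ln t * Ps" using r1 P by simp
  have "t powr p * N < t powr q * N" using powr_less_mono[OF pq t] N by simp
  also have "\<dots> \<le> t powr q * (N + r * ln t * Ps)"
    using \<open>0 \<le> r * ln t * Ps\<close> by (intro mult_left_mono) auto
  finally show ?thesis by simp
qed

lemma fiber_max:
  assumes uN: "u \<in> Nh" and t: "0 < t"
  shows "I (sc t u) \<le> I u"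
proof -
  have uE: "u \<in> E" using Nh_E[OF uN] .
  define N where "N = Nrm u"
  define Ps where "Ps = Psi u"
  have PhiN: "Phi u = N" using Nh_iff[OF uE] uN by (simp add: N_def)
  have N0: "0 < N" using Nrm_pos[OF uE] Nh_iff[OF uE] uN by (simp add: N_def)
  have P0: "0 < Ps" using Psi_pos[OF uE] Nh_iff[OF uE] uN by (simp add: Ps_def)
  define f where "f x = N / p * x powr p + (r / q^2 * Ps) * x powr q - 1 / q * (x powr q * (N + (r * Ps) * ln x))" for x
  have fI: "I (sc x u) = f x" if "0 < x" for x
    using I_sc[OF uE that] that p_m by (simp add: f_def N_def Ps_def PhiN powr_realpow algebra_simps add_divide_distrib)
  have fder: "(f has_real_derivative (x powr p * N - x powr q * (N + r * ln x * Ps)) / x) (at x)" if x: "0 < x" for x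
  proof -
    note d1 = has_real_derivative_powr[OF x, of p]
    note d2 = has_real_derivative_powr[OF x, of q]
    note dl = DERIV_ln_divide[OF x]
    have "(f has_real_derivative
        N / p * (p * x powr (p - 1)) + (r / q^2 * Ps) * (q * x powr (q - 1))
        - 1 / q * ((q * x powr (q - 1)) * (N + (r * Ps) * ln x) + (0 + (r * Ps) * (1 / x)) * x powr q)) (at x)"
      unfolding f_def[abs_def]
      by (rule DERIV_diff[OF DERIV_add[OF DERIV_cmult[OF d1] DERIV_cmult[OF d2]]
            DERIV_cmult[OF DERIV_mult[OF d2 DERIV_add[OF DERIV_const DERIV_cmult[OF dl]]]]])
    moreover have "N / p * (p * x powr (p - 1)) + (r / q^2 * Ps) * (q * x powr (q - 1))
        - 1 / q * ((q * x powr (q - 1)) * (N + (r * Ps) * ln x) + (0 + (r * Ps) * (1 / x)) * x powr q)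
        = (x powr p * N - x powr q * (N + r * ln x * Ps)) / x"
    proof -
      have e1: "x powr (p - 1) = x powr p / x" using x by (simp add: powr_diff)
      have e2: "x powr (q - 1) = x powr q / x" using x by (simp add: powr_diff)
      have "p \<noteq> 0" "q \<noteq> 0" using p2 q1 by auto
      then show ?thesis unfolding e1 e2 using x by (simp add: field_simps power2_eq_square)
    qed
    ultimately show ?thesis by simp
  qed
  have fcont: "continuous_on {a..b} f" if "0 < a" for a b
  proof (intro continuous_at_imp_continuous_on ballI)
    fix x assume "x \<in> {a..b}"
    then have "0 < x" using that by auto
    then show "isCont f x" by (rule DERIV_isCont[OF fder])
  qed
  have "f t \<le> f 1"
  proof (cases t "1::real" rule: linorder_cases)
    case less
    show ?thesis
    proof (rule DERIV_nonneg_imp_increasing_open[OF less_imp_le[OF less] _ fcont[OF t]])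
      fix x assume "t < x" "x < 1"
      then show "\<exists>y. DERIV f x :> y \<and> 0 \<le> y"
        using fder[of x] G0_pos[OF N0 P0, of x] t by (intro exI[of _ "(x powr p * N - x powr q * (N + r * ln x * Ps)) / x"]) auto
    qed
  next
    case greater
    show ?thesis
    proof (rule DERIV_nonpos_imp_decreasing_open[OF less_imp_le[OF greater] _ fcont])
      fix x assume "1 < x" "x < t"
      then show "\<exists>y. DERIV f x :> y \<and> y \<le> 0"
        using fder[of x] G0_neg[OF N0 P0, of x] by (intro exI[of _ "(x powr p * N - x powr q * (N + r * ln x * Ps)) / x"])
          (auto simp: divide_nonpos_pos)
    qed simp
  qed simp
  moreover have "I u = f 1" using fI[of 1] by (simp add: sc_def)
  ultimately show ?thesis using fI[OF t] by simp
qed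

end

context setting begin

lemma crit_ge:
  assumes uN: "u \<in> Nh" and umin: "\<And>w. w \<in> Nh \<Longrightarrow> I u \<le> I w" and vE: "v \<in> E"
  shows "0 \<le> dI' u v"
proof (rule ccontr)
  assume "\<not> 0 \<le> dI' u v"
  then have Dneg: "dI' u v < 0" by simp
  have uE: "u \<in> E" using Nh_E[OF uN] .
  define N where "N = Nrm u"
  define Ps where "Ps = Psi u"
  have PhiN: "Phi u = N" using Nh_iff[OF uE] uN by (simp add: N_def)
  have unz: "u \<noteq> (\<lambda>n. 0)" using Nh_iff[OF uE] uN by simp
  have N0: "0 < N" using Nrm_pos[OF uE unz] by (simp add: N_def)
  have P0: "0 < Ps" using Psi_pos[OF uE unz] by (simp add: Ps_def)
  define Af where "Af s = Nrm (ws u s v)" for s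
  define Bf where "Bf s = Psi (ws u s v)" for s
  define Cf where "Cf s = Phi (ws u s v)" for s
  define \<alpha> where "\<alpha> s = (Af s - N) / s" for s
  define \<beta> where "\<beta> s = (Bf s - Ps) / s" for s
  define \<gamma> where "\<gamma> s = (Cf s - N) / s" for s
  define A' where "A' = real m * infsum (T u v) UNIV"
  define B' where "B' = infsum (\<lambda>n. c n * Pw' (u n) * v n) UNIV"
  define C' where "C' = infsum (\<lambda>n. c n * Lf' (u n) * v n) UNIV"
  have Deq: "A' / p + r / q^2 * B' - C' / q = dI' u v"
    using D_eq[OF uE vE] by (simp add: A'_def B'_def C'_def)
  have la: "(\<alpha> \<longlongrightarrow> A') (at 0)" using A_deriv(2)[OF uE vE]
    by (simp add: \<alpha>_def[abs_def] Af_def N_def A'_def)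
  have lb: "(\<beta> \<longlongrightarrow> B') (at 0)" using B_deriv(2)[OF uE vE]
    by (simp add: \<beta>_def[abs_def] Bf_def Ps_def B'_def)
  have lc: "(\<gamma> \<longlongrightarrow> C') (at 0)" using C_deriv(2)[OF uE vE] PhiN
    by (simp add: \<gamma>_def[abs_def] Cf_def C'_def)
  have cont: "(F \<longlongrightarrow> F0) (at 0)" if "(h \<longlongrightarrow> H) (at 0)" and "\<And>s. s \<noteq> 0 \<Longrightarrow> F s = F0 + s * h s"
    for F :: "real \<Rightarrow> real" and F0 h H
  proof -
    have "((\<lambda>s. F0 + s * h s) \<longlongrightarrow> F0 + 0 * H) (at 0)"
      by (intro tendsto_intros that(1))
    moreover have "\<forall>\<^sub>F s in at 0. F0 + s * h s = F s"
      using ev_small by eventually_elim (simp add: that(2))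
    ultimately show ?thesis using tendsto_cong by force
  qed
  have cA: "(Af \<longlongrightarrow> N) (at 0)" by (rule cont[OF la]) (simp add: \<alpha>_def)
  have cB: "(Bf \<longlongrightarrow> Ps) (at 0)" by (rule cont[OF lb]) (simp add: \<beta>_def)
  have cC: "(Cf \<longlongrightarrow> N) (at 0)" by (rule cont[OF lc]) (simp add: \<gamma>_def)
  define G where "G s t = t ^ m * Af s - t powr q * (Cf s + r * ln t * Bf s)" for s t
  define Q where "Q s t = t ^ m / p * \<alpha> s + r / q^2 * (t powr q * \<beta> s) - t powr q * (\<gamma> s + r * ln t * \<beta> s) / q" for s t
  define F2 where "F2 = (at_right (0::real)) \<times>\<^sub>F nhds (1::real)"
  have ar: "at_right (0::real) \<le> at 0" by (rule at_within_le_at)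
  have ha: "((\<lambda>x. \<alpha> (fst x)) \<longlongrightarrow> A') F2" unfolding F2_def by (rule tendsto_fst_prod[OF tendsto_mono[OF ar la]])
  have hb: "((\<lambda>x. \<beta> (fst x)) \<longlongrightarrow> B') F2" unfolding F2_def by (rule tendsto_fst_prod[OF tendsto_mono[OF ar lb]])
  have hc: "((\<lambda>x. \<gamma> (fst x)) \<longlongrightarrow> C') F2" unfolding F2_def by (rule tendsto_fst_prod[OF tendsto_mono[OF ar lc]])
  have ht: "((\<lambda>x. snd x) \<longlongrightarrow> (1::real)) F2" unfolding F2_def by (rule tendsto_snd_prod[OF filterlim_ident])
  have "((\<lambda>x. Q (fst x) (snd x)) \<longlongrightarrow>
      1 ^ m / p * A' + r / q^2 * (1 powr q * B') - 1 powr q * (C' + r * ln 1 * B') / q) F2"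
  proof -
    have htm: "((\<lambda>x. snd x ^ m) \<longlongrightarrow> 1 ^ m) F2" by (rule tendsto_power[OF ht])
    have htq: "((\<lambda>x. snd x powr q) \<longlongrightarrow> 1 powr q) F2" by (rule tendsto_powr[OF ht tendsto_const]) simp
    have htl: "((\<lambda>x. ln (snd x)) \<longlongrightarrow> ln 1) F2" by (rule tendsto_ln[OF ht]) simp
    have p0: "p \<noteq> 0" and q0: "q \<noteq> 0" using p2 q1 by auto
    have T1: "((\<lambda>x. snd x ^ m / p * \<alpha> (fst x)) \<longlongrightarrow> 1 ^ m / p * A') F2"
      by (rule tendsto_mult[OF tendsto_divide[OF htm tendsto_const p0] ha])
    have T2: "((\<lambda>x. r / q^2 * (snd x powr q * \<beta> (fst x))) \<longlongrightarrow> r / q^2 * (1 powr q * B')) F2"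
      by (rule tendsto_mult[OF tendsto_const tendsto_mult[OF htq hb]])
    have T3: "((\<lambda>x. snd x powr q * (\<gamma> (fst x) + r * ln (snd x) * \<beta> (fst x)) / q)
        \<longlongrightarrow> 1 powr q * (C' + r * ln 1 * B') / q) F2"
      by (rule tendsto_divide[OF tendsto_mult[OF htq tendsto_add[OF hc tendsto_mult[OF tendsto_mult[OF tendsto_const htl] hb]]] tendsto_const q0])
    show ?thesis unfolding Q_def by (rule tendsto_diff[OF tendsto_add[OF T1 T2] T3])
  qed
  then have Qlim: "((\<lambda>x. Q (fst x) (snd x)) \<longlongrightarrow> dI' u v) F2" using Deq by simp
  have "\<forall>\<^sub>F x in F2. Q (fst x) (snd x) < 0" using order_tendstoD(2)[OF Qlim Dneg] .
  then obtain Pf Pg where Pf: "eventually Pf (at_right 0)" and Pg: "eventually Pg (nhds 1)"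
      and PQ: "\<And>s t. Pf s \<Longrightarrow> Pg t \<Longrightarrow> Q s t < 0"
    unfolding F2_def eventually_prod_filter by auto
  obtain d where d: "0 < d" "\<And>t. dist t 1 < d \<Longrightarrow> Pg t"
    using Pg unfolding eventually_nhds_metric by auto
  define \<delta> where "\<delta> = min (d / 2) (1 / 2)"
  have \<delta>: "0 < \<delta>" "\<delta> < d" "\<delta> \<le> 1/2" using d by (auto simp: \<delta>_def)
  have Af0: "Af 0 = N" "Bf 0 = Ps" "Cf 0 = N" by (simp_all add: Af_def Bf_def Cf_def N_def Ps_def PhiN)
  have G0: "G 0 t = t powr p * N - t powr q * (N + r * ln t * Ps)" if "0 < t" for t
    using that p_m by (simp add: G_def Af0 powr_realpow)
  have g1: "0 < G 0 (1 - \<delta>)" using G0_pos[OF N0 P0, of "1 - \<delta>"] G0[of "1 - \<delta>"] \<delta> by simp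
  have g2: "G 0 (1 + \<delta>) < 0" using G0_neg[OF N0 P0, of "1 + \<delta>"] G0[of "1 + \<delta>"] \<delta> by simp
  have Gc: "((\<lambda>s. G s t) \<longlongrightarrow> G 0 t) (at_right 0)" for t
  proof -
    have "((\<lambda>s. G s t) \<longlongrightarrow> t ^ m * N - t powr q * (N + r * ln t * Ps)) (at 0)"
      unfolding G_def by (intro tendsto_intros cA cB cC)
    then show ?thesis using tendsto_mono[OF ar] by (simp add: G_def Af0)
  qed
  have ev1: "\<forall>\<^sub>F s in at_right 0. 0 < G s (1 - \<delta>)" using order_tendstoD(1)[OF Gc g1] .
  have ev2: "\<forall>\<^sub>F s in at_right 0. G s (1 + \<delta>) < 0" using order_tendstoD(2)[OF Gc g2] .
  obtain n0 where n0: "u n0 \<noteq> 0" using unz by auto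
  have ev3: "\<forall>\<^sub>F s in at_right 0. ws u s v \<noteq> (\<lambda>n. 0)"
  proof -
    have "((\<lambda>s. u n0 + s * v n0) \<longlongrightarrow> u n0 + 0 * v n0) (at_right 0)"
      by (intro tendsto_intros)
    then have "\<forall>\<^sub>F s in at_right 0. u n0 + s * v n0 \<noteq> 0"
      using tendsto_imp_eventually_ne n0 by simp
    then show ?thesis by eventually_elim (auto simp: ws_def fun_eq_iff)
  qed
  have ev4: "\<forall>\<^sub>F s::real in at_right 0. 0 < s" by (rule eventually_at_right_less)
  have "\<forall>\<^sub>F s in at_right 0. Pf s \<and> 0 < G s (1 - \<delta>) \<and> G s (1 + \<delta>) < 0 \<and> ws u s v \<noteq> (\<lambda>n. 0) \<and> 0 < s"
    using Pf ev1 ev2 ev3 ev4 by eventually_elim auto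
  moreover have nbr: "at_right (0::real) \<noteq> bot" by simp
  ultimately obtain s where "Pf s \<and> 0 < G s (1 - \<delta>) \<and> G s (1 + \<delta>) < 0 \<and> ws u s v \<noteq> (\<lambda>n. 0) \<and> 0 < s"
    using eventually_happens' by blast
  then have s: "Pf s" "0 < G s (1 - \<delta>)" "G s (1 + \<delta>) < 0" "ws u s v \<noteq> (\<lambda>n. 0)" "0 < s" by auto
  have contG: "continuous_on {1 - \<delta>..1 + \<delta>} (\<lambda>t. G s t)"
    unfolding G_def using \<delta> by (intro continuous_intros) auto
  obtain t where t: "1 - \<delta> \<le> t" "t \<le> 1 + \<delta>" "G s t = 0"
    using IVT2'[of "\<lambda>t. G s t" "1 + \<delta>" 0 "1 - \<delta>", OF _ _ _ contG] s(2,3) \<delta> by auto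
  have t0: "0 < t" using t \<delta> by simp
  have wsE: "ws u s v \<in> E" by (rule ws_E[OF uE vE])
  have wN: "sc t (ws u s v) \<in> Nh"
    unfolding nehari_def using E_D[OF sc_E[OF wsE]] sc_nz[OF _ s(4)] t0 dI_sc[OF wsE t0] t(3)
    by (auto simp: G_def Af_def Bf_def Cf_def)
  have Iw: "I (sc t (ws u s v)) = t ^ m * Af s / p + r / q^2 * (t powr q * Bf s) - t powr q * (Cf s + r * ln t * Bf s) / q"
    using I_sc[OF wsE t0] by (simp add: Af_def Bf_def Cf_def)
  have Iu: "I (sc t u) = t ^ m * N / p + r / q^2 * (t powr q * Ps) - t powr q * (N + r * ln t * Ps) / q"
    using I_sc[OF uE t0] by (simp add: N_def Ps_def PhiN)
  have "I (sc t u) \<le> I (sc t (ws u s v))" using fiber_max[OF uN t0] umin[OF wN] by simp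
  moreover have "I (sc t (ws u s v)) - I (sc t u) = s * Q s t"
  proof -
    have nz: "s \<noteq> 0" "p \<noteq> 0" "q \<noteq> 0" using s(5) p2 q1 by auto
    have sa: "s * \<alpha> s = Af s - N" "s * \<beta> s = Bf s - Ps" "s * \<gamma> s = Cf s - N"
      using nz by (simp_all add: \<alpha>_def \<beta>_def \<gamma>_def)
    have "s * Q s t = t ^ m / p * (s * \<alpha> s) + r / q^2 * (t powr q * (s * \<beta> s))
        - t powr q * (s * \<gamma> s + r * ln t * (s * \<beta> s)) / q"
      unfolding Q_def using nz by (simp add: field_simps)
    also have "\<dots> = I (sc t (ws u s v)) - I (sc t u)"
      unfolding sa Iw Iu using nz by (simp add: field_simps)
    finally show ?thesis by simp
  qed
  ultimately have "0 \<le> s * Q s t" by simp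
  then have "0 \<le> Q s t" using s(5) by (simp add: zero_le_mult_iff)
  moreover have "Q s t < 0"
  proof (rule PQ[OF s(1) d(2)])
    show "dist t 1 < d" using t \<delta> by (simp add: dist_real_def abs_le_iff)
  qed
  ultimately show False by simp
qed

lemma dI_neg: "dI' u (\<lambda>n. - v n) = - dI' u v"
proof -
  have f: "fdiff (\<lambda>n. - v n) n = - fdiff v n" for n by (simp add: fdiff_def)
  have e1: "(\<lambda>n. a n * phi p (fdiff u n) * fdiff (\<lambda>n. - v n) n + b n * phi p (u n) * - v n)
      = (\<lambda>n. - (a n * phi p (fdiff u n) * fdiff v n + b n * phi p (u n) * v n))"
    by (rule ext) (simp add: f)
  have e2: "(\<lambda>n. if u n = 0 then 0 else c n * phi q (u n) * - v n * ln (\<bar>u n\<bar> powr r))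
      = (\<lambda>n. - (if u n = 0 then 0 else c n * phi q (u n) * v n * ln (\<bar>u n\<bar> powr r)))"
    by (rule ext) simp
  show ?thesis unfolding dI_def e1 e2 infsum_uminus by simp
qed

lemma crit:
  assumes uN: "u \<in> Nh" and umin: "\<And>w. w \<in> Nh \<Longrightarrow> I u \<le> I w" and vE: "v \<in> E"
  shows "dI' u v = 0"
  using crit_ge[OF uN umin vE] crit_ge[OF uN umin neg_E[OF vE]] dI_neg[of u v] by simp

end

lemma pow_superadd:
  fixes x y :: real
  assumes "0 \<le> x" "0 \<le> y"
  shows "x ^ Suc n + y ^ Suc n \<le> (x + y) ^ Suc n"
proof (induction n)
  case 0 then show ?case by simp
next
  case (Suc n)
  have "x ^ Suc (Suc n) + y ^ Suc (Suc n) \<le> (x + y) * (x ^ Suc n + y ^ Suc n)"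
    using assms by (simp add: algebra_simps)
  also have "\<dots> \<le> (x + y) * (x + y) ^ Suc n"
    using Suc assms by (intro mult_left_mono) auto
  finally show ?case by simp
qed

context setting begin

lemma m_suc: "Suc (m - 1) = m" using m2 by arith

lemma odd_pow: "(- x) ^ (m - 1) = - ((x::real) ^ (m - 1))"
proof -
  have "odd (m - 1)" using m_even m2 by simp
  then show ?thesis by (simp add: power_minus_odd)
qed

lemma pow_m_split: "(x::real) ^ (m - 1) * x = x ^ m"
proof -
  have "x ^ (m - 1) * x = x ^ Suc (m - 1)" by (simp only: power_Suc2)
  then show ?thesis unfolding m_suc .
qed

lemma K1: "(x - y) ^ (m - 1) * (max x 0 - max y 0) \<ge> (max x 0 - max (y::real) 0) ^ m"
proof (cases "0 \<le> x")
  case True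
  show ?thesis
  proof (cases "0 \<le> y")
    case True
    then show ?thesis using \<open>0 \<le> x\<close> pow_m_split[of "x - y"] by simp
  next
    case False
    have "x ^ (m - 1) \<le> (x - y) ^ (m - 1)" using \<open>0 \<le> x\<close> False by (intro power_mono) auto
    then have "x ^ (m - 1) * x \<le> (x - y) ^ (m - 1) * x" using \<open>0 \<le> x\<close> by (intro mult_right_mono) auto
    then show ?thesis using \<open>0 \<le> x\<close> False pow_m_split[of x] by simp
  qed
next
  case False
  show ?thesis
  proof (cases "0 \<le> y")
    case True
    have "y ^ (m - 1) \<le> (y - x) ^ (m - 1)" using True False by (intro power_mono) auto
    then have "y ^ (m - 1) * y \<le> (y - x) ^ (m - 1) * y" using True by (intro mult_right_mono) auto
    moreover have "(x - y) ^ (m - 1) = - ((y - x) ^ (m - 1))" using odd_pow[of "y - x"] by simp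
    moreover have "(- y) ^ m = y ^ m" using m_even by simp
    ultimately show ?thesis using True False pow_m_split[of y] by simp
  next
    case False
    then show ?thesis using \<open>\<not> 0 \<le> x\<close> m2 by (simp add: power_0_left)
  qed
qed

lemma K2: "(x - y) ^ (m - 1) * (min x 0 - min y 0) \<ge> (min x 0 - min (y::real) 0) ^ m"
proof -
  have h: "((- x) - (- y)) ^ (m - 1) * (max (- x) 0 - max (- y) 0) \<ge> (max (- x) 0 - max (- y) 0) ^ m"
    by (rule K1)
  have e1: "max (- x) 0 - max (- y) 0 = - (min x 0 - min y 0)" by (simp add: max_def min_def)
  have e2: "((- x) - (- y)) ^ (m - 1) = - ((x - y) ^ (m - 1))" using odd_pow[of "x - y"] by simp
  have e3: "(- (min x 0 - min y 0)) ^ m = (min x 0 - min y 0) ^ m" by (rule power_minus_even[OF m_even])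
  show ?thesis using h unfolding e1 e2 e3 minus_mult_minus .
qed

lemma K3: "(max x 0 - max y 0) ^ m + (min x 0 - min y 0) ^ m \<le> ((x::real) - y) ^ m"
proof -
  have z: "(0::real) ^ m = 0" using m2 by (simp add: power_0_left)
  show ?thesis
  proof (cases "0 \<le> x")
    case True
    show ?thesis
    proof (cases "0 \<le> y")
      case True then show ?thesis using \<open>0 \<le> x\<close> m2 by (simp add: power_0_left)
    next
      case False
      have "x ^ Suc (m - 1) + (- y) ^ Suc (m - 1) \<le> (x + - y) ^ Suc (m - 1)"
        using True False by (intro pow_superadd) auto
      then show ?thesis using True False unfolding m_suc by simp
    qed
  next
    case False
    show ?thesis
    proof (cases "0 \<le> y")
      case True
      have "y ^ Suc (m - 1) + (- x) ^ Suc (m - 1) \<le> (y + - x) ^ Suc (m - 1)"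
        using True False by (intro pow_superadd) auto
      moreover have "(x - y) ^ m = (y - x) ^ m" using power_minus_even[OF m_even, of "y - x"] by simp
      ultimately show ?thesis using True False unfolding m_suc by (simp add: power_minus_even[OF m_even] add.commute)
    next
      case False then show ?thesis using \<open>\<not> 0 \<le> x\<close> m2 by (simp add: power_0_left)
    qed
  qed
qed

end

context setting begin

lemma fdiff_pos: "fdiff (pos_part u) n = max (u (n + 1)) 0 - max (u n) 0"
  by (simp add: fdiff_def pos_part_def)
lemma fdiff_neg: "fdiff (neg_part u) n = min (u (n + 1)) 0 - min (u n) 0"
  by (simp add: fdiff_def neg_part_def)

lemma z_m: "(0::real) ^ m = 0" using m2 by (simp add: power_0_left)

lemma maxmin_pow: "(max y 0) ^ m + (min y 0) ^ m = (y::real) ^ m"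
  using m2 by (cases "0 \<le> y") (auto simp: power_0_left max_def min_def)

lemma pow_m_split': "(x::real) ^ (m - Suc 0) * x = x ^ m"
  using pow_m_split[of x] by simp

lemma NT_split: "NT (pos_part u) n + NT (neg_part u) n \<le> NT u n"
proof -
  have "a n * ((fdiff (pos_part u) n) ^ m + (fdiff (neg_part u) n) ^ m) \<le> a n * (fdiff u n) ^ m"
    unfolding fdiff_pos fdiff_neg using apos[of n] K3[of "u (n+1)" "u n"]
    by (intro mult_left_mono) (auto simp: fdiff_def)
  then have A: "a n * (fdiff (pos_part u) n) ^ m + a n * (fdiff (neg_part u) n) ^ m \<le> a n * (fdiff u n) ^ m"
    by (simp only: distrib_left)
  have "(pos_part u n) ^ m + (neg_part u n) ^ m = (u n) ^ m"
    by (simp add: pos_part_def neg_part_def maxmin_pow)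
  then have B: "b n * (pos_part u n) ^ m + b n * (neg_part u n) ^ m = b n * (u n) ^ m"
    by (simp only: distrib_left[symmetric])
  show ?thesis unfolding NT_eq using A B by linarith
qed

lemma NT_pos_le: "NT (pos_part u) n \<le> NT u n"
  using NT_split[of u n] NT_nonneg[of "neg_part u" n] by linarith
lemma NT_neg_le: "NT (neg_part u) n \<le> NT u n"
  using NT_split[of u n] NT_nonneg[of "pos_part u" n] by linarith
lemma pos_E: "u \<in> E \<Longrightarrow> pos_part u \<in> E"
  unfolding E_iff by (rule sum_cmp) (auto simp: NT_nonneg NT_pos_le)
lemma negp_E: "u \<in> E \<Longrightarrow> neg_part u \<in> E"
  unfolding E_iff by (rule sum_cmp) (auto simp: NT_nonneg NT_neg_le)

lemma T_pos_ge: "NT (pos_part u) n \<le> T u (pos_part u) n"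
proof -
  have "a n * (fdiff (pos_part u) n) ^ m \<le> a n * ((fdiff u n) ^ (m - 1) * fdiff (pos_part u) n)"
    unfolding fdiff_pos using apos[of n] K1[of "u (n+1)" "u n"]
    by (intro mult_left_mono) (auto simp: fdiff_def)
  moreover have "(u n) ^ (m - 1) * max (u n) 0 = (max (u n) 0) ^ m"
    by (cases "0 \<le> u n") (use m2 in \<open>auto simp: pow_m_split' power_0_left max_def\<close>)
  ultimately show ?thesis unfolding NT_eq T_def phi_p by (simp add: pos_part_def algebra_simps)
qed

lemma T_neg_ge: "NT (neg_part u) n \<le> T u (neg_part u) n"
proof -
  have "a n * (fdiff (neg_part u) n) ^ m \<le> a n * ((fdiff u n) ^ (m - 1) * fdiff (neg_part u) n)"
    unfolding fdiff_neg using apos[of n] K2[of "u (n+1)" "u n"]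
    by (intro mult_left_mono) (auto simp: fdiff_def)
  moreover have "(u n) ^ (m - 1) * min (u n) 0 = (min (u n) 0) ^ m"
    by (cases "0 \<le> u n") (use m2 in \<open>auto simp: pow_m_split' power_0_left min_def\<close>)
  ultimately show ?thesis unfolding NT_eq T_def phi_p by (simp add: neg_part_def algebra_simps)
qed

lemma T_sum: "T u (pos_part u) n + T u (neg_part u) n = NT u n"
proof -
  have f: "fdiff (pos_part u) n + fdiff (neg_part u) n = fdiff u n"
    by (simp add: fdiff_def pos_part_def neg_part_def max_def min_def)
  have g: "pos_part u n + neg_part u n = u n" by (simp add: pos_part_def neg_part_def max_def min_def)
  have "T u (pos_part u) n + T u (neg_part u) n
      = a n * phi p (fdiff u n) * (fdiff (pos_part u) n + fdiff (neg_part u) n)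
        + b n * phi p (u n) * (pos_part u n + neg_part u n)"
    unfolding T_def by (simp add: algebra_simps)
  also have "\<dots> = NT u n" unfolding f g by (simp add: norm_term_def mult.assoc phi_self)
  finally show ?thesis .
qed

lemma S_pos: "(if u n = 0 then 0 else c n * phi q (u n) * pos_part u n * ln (\<bar>u n\<bar> powr r))
   = log_term q r c (pos_part u) n"
proof (cases "0 < u n")
  case True
  then show ?thesis using phi_self[of q "u n"]
    by (simp add: pos_part_def log_term_def max_def mult.assoc)
qed (auto simp: pos_part_def log_term_def max_def)

lemma S_neg: "(if u n = 0 then 0 else c n * phi q (u n) * neg_part u n * ln (\<bar>u n\<bar> powr r))
   = log_term q r c (neg_part u) n"
proof (cases "u n < 0")
  case True
  then show ?thesis using phi_self[of q "u n"]
    by (simp add: neg_part_def log_term_def min_def mult.assoc)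
qed (auto simp: neg_part_def log_term_def min_def)

lemma log_split: "log_term q r c u n = log_term q r c (pos_part u) n + log_term q r c (neg_part u) n"
  by (auto simp: log_term_def pos_part_def neg_part_def max_def min_def)

lemma Pw_split: "Pw (u n) = Pw (pos_part u n) + Pw (neg_part u n)"
  using q1 by (auto simp: Pw_def pos_part_def neg_part_def max_def min_def)

lemma dI_pos: "dI' u (pos_part u) = infsum (T u (pos_part u)) UNIV - Phi (pos_part u)"
  unfolding dI_def T_def[abs_def] Phi_def S_pos ..
lemma dI_negp: "dI' u (neg_part u) = infsum (T u (neg_part u)) UNIV - Phi (neg_part u)"
  unfolding dI_def T_def[abs_def] Phi_def S_neg ..

lemma part_J:
  assumes uE: "u \<in> E" and wE: "w \<in> E" and wnz: "w \<noteq> (\<lambda>n. 0)"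
    and Ts: "T u w summable_on UNIV" and ge: "\<And>n. NT w n \<le> T u w n"
    and d0: "infsum (T u w) UNIV = Phi w"
  shows "cs \<le> J w"
proof -
  have "Nrm w \<le> infsum (T u w) UNIV"
    unfolding normp_def by (rule infsum_mono) (use wE Ts ge in \<open>auto simp: E_iff\<close>)
  then obtain t where "0 < t" "t \<le> 1" "sc t w \<in> Nh" "I (sc t w) \<le> J w"
    using Fib[OF wE wnz] d0 by auto
  then show ?thesis using cs_le by force
qed

lemma sign_changing:
  assumes uM: "u \<in> signchanging_nehari p q r a b c"
  shows "2 * cs \<le> I u"
proof -
  define P where "P = pos_part u"
  define Ng where "Ng = neg_part u"
  have uE: "u \<in> E" using uM by (simp add: signchanging_nehari_def spaceD_def)
  have Pnz: "P \<noteq> (\<lambda>n. 0)" and Nnz: "Ng \<noteq> (\<lambda>n. 0)" and dP: "dI' u P = 0" and dN: "dI' u Ng = 0"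
    using uM by (auto simp: signchanging_nehari_def P_def Ng_def)
  have PE: "P \<in> E" using pos_E[OF uE] by (simp add: P_def)
  have NE: "Ng \<in> E" using negp_E[OF uE] by (simp add: Ng_def)
  have TP: "T u P summable_on UNIV" by (rule A_deriv(1)[OF uE PE])
  have TN: "T u Ng summable_on UNIV" by (rule A_deriv(1)[OF uE NE])
  have eP: "infsum (T u P) UNIV = Phi P" using dP dI_pos[of u] by (simp add: P_def)
  have eN: "infsum (T u Ng) UNIV = Phi Ng" using dN dI_negp[of u] by (simp add: Ng_def)
  have JP: "cs \<le> J P" by (rule part_J[OF uE PE Pnz TP _ eP]) (simp add: P_def T_pos_ge)
  have JN: "cs \<le> J Ng" by (rule part_J[OF uE NE Nnz TN _ eN]) (simp add: Ng_def T_neg_ge)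
  have bP: "\<And>n. \<bar>P n\<bar> \<le> max 1 (Nrm P / b0)" using bound_E[OF PE] .
  have bN: "\<And>n. \<bar>Ng n\<bar> \<le> max 1 (Nrm Ng / b0)" using bound_E[OF NE] .
  have Phi_u: "Phi u = Phi P + Phi Ng"
  proof -
    have ls: "log_term q r c u = (\<lambda>n. log_term q r c P n + log_term q r c Ng n)"
      unfolding P_def Ng_def by (rule ext) (rule log_split)
    have "Phi u = infsum (\<lambda>n. log_term q r c P n + log_term q r c Ng n) UNIV"
      unfolding Phi_def ls ..
    also have "\<dots> = Phi P + Phi Ng"
      unfolding Phi_def by (rule infsum_add[OF log_summable[OF bP] log_summable[OF bN]])
    finally show ?thesis .
  qed
  have "Phi P + Phi Ng = infsum (\<lambda>n. T u P n + T u Ng n) UNIV"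
    using infsum_add[OF TP TN] eP eN by simp
  also have "\<dots> = Nrm u" unfolding normp_def P_def Ng_def T_sum ..
  finally have PhiN: "Phi u = Nrm u" using Phi_u by simp
  have NrmS: "Nrm P + Nrm Ng \<le> Nrm u"
  proof -
    have "Nrm P + Nrm Ng = infsum (\<lambda>n. NT P n + NT Ng n) UNIV"
      unfolding normp_def using infsum_add[of "NT P" UNIV "NT Ng"] PE NE by (simp add: E_iff)
    also have "\<dots> \<le> Nrm u" unfolding normp_def
      by (rule infsum_mono) (use PE NE uE NT_split in \<open>auto simp: E_iff P_def Ng_def intro: summable_on_add\<close>)
    finally show ?thesis .
  qed
  have PsiS: "Psi u = Psi P + Psi Ng"
  proof -
    have "Psi u = infsum (\<lambda>n. c n * Pw (P n) + c n * Pw (Ng n)) UNIV"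
      unfolding Psi_def P_def Ng_def by (simp add: Pw_split[of u] algebra_simps)
    also have "\<dots> = Psi P + Psi Ng"
      unfolding Psi_def by (rule infsum_add[OF Pw_summable[OF bP] Pw_summable[OF bN]])
    finally show ?thesis .
  qed
  have "I u = (1/p - 1/q) * Nrm u + r / q^2 * Psi u"
    using PhiN by (simp add: I_eq algebra_simps)
  also have "\<dots> \<ge> J P + J Ng"
  proof -
    have "(1/p - 1/q) * (Nrm P + Nrm Ng) \<le> (1/p - 1/q) * Nrm u"
      using NrmS pq_coef by (intro mult_left_mono) auto
    then show ?thesis unfolding J_def PsiS by (simp add: algebra_simps)
  qed
  finally show ?thesis using JP JN by simp
qed

end

theorem theorem1p2:
  fixes p q r :: real and a b c :: "int \<Rightarrow> real"
  assumes "1 < p" and "p < q" and "\<exists>k::nat. k \<ge> 1 \<and> p / 2 = real k" and "r \<ge> 1"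
    and "\<And>n. a n > 0" and "\<And>n. b n > 0" and "\<And>n. c n > 0"
    and C1: "\<exists>b0>0. \<forall>n. b n \<ge> b0" "\<forall>M. \<exists>N. \<forall>n. \<bar>n\<bar> \<ge> N \<longrightarrow> b n \<ge> M"
    and C2: "\<exists>c0>0. \<forall>n. c n \<le> c0" "c summable_on UNIV"
  shows "\<exists>ubar \<in> nehari p q r a b c.
           (\<forall>v \<in> spaceD p q r a b c. dI p q r a b c ubar v = 0)
         \<and> (\<forall>u \<in> nehari p q r a b c. energyI p q r a b c ubar \<le> energyI p q r a b c u)
         \<and> energyI p q r a b c ubar = (INF u \<in> nehari p q r a b c. energyI p q r a b c u)
         \<and> energyI p q r a b c ubar > 0
         \<and> (\<forall>u \<in> signchanging_nehari p q r a b c. energyI p q r a b c u \<ge> 2 * energyI p q r a b c ubar)"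
proof -
  obtain k :: nat where k: "k \<ge> 1" "p / 2 = real k" using assms(3) by blast
  obtain b0 where b0: "b0 > 0" "\<forall>n. b n \<ge> b0" using C1(1) by blast
  have pk: "p = real (2 * k)" using k(2) by simp
  interpret S: setting p q r a b c "2 * k" b0
  proof
    show "p = real (2 * k)" by (rule pk)
    show "even (2 * k)" by simp
    show "2 \<le> 2 * k" using k(1) by simp
  qed (use assms b0 C2 in auto)
  obtain ub where ub: "ub \<in> nehari p q r a b c" "energyI p q r a b c ub = S.cs"
    using S.exists_min by blast
  have umin: "energyI p q r a b c ub \<le> energyI p q r a b c w" if "w \<in> nehari p q r a b c" for w
    using S.cs_le[OF that] ub(2) by simp
  have A: "\<forall>v \<in> spaceD p q r a b c. dI p q r a b c ub v = 0"
  proof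
    fix v assume "v \<in> spaceD p q r a b c"
    then have "v \<in> spaceE p a b" by (simp add: spaceD_def)
    then show "dI p q r a b c ub v = 0" using S.crit[of ub v] ub(1) umin by blast
  qed
  have C: "energyI p q r a b c ub = (INF u \<in> nehari p q r a b c. energyI p q r a b c u)"
    using ub(2) by (simp add: S.cs_def)
  have D: "energyI p q r a b c ub > 0"
  proof -
    have "0 < (1/p - 1/q) * b0" using S.pq_coef b0(1) by simp
    also have "\<dots> \<le> energyI p q r a b c ub" by (rule S.I_pos[OF ub(1)])
    finally show ?thesis .
  qed
  have E2: "\<forall>u \<in> signchanging_nehari p q r a b c. energyI p q r a b c u \<ge> 2 * energyI p q r a b c ub"
    using S.sign_changing ub(2) by simp
  show ?thesis using ub(1) A umin C D E2 by blast
qed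


end
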